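(* Let $\mathbb{W}$ be a union of lines and ACM points in $\mathbb{P}^1\times\mathbb{P}^1$ and let $\mathcal{G}(I_{\mathbb{W}})$ be its standard generating set. Then for any nonempty subset $S\subseteq\mathcal{G}(I_{\mathbb{W}})$, the ideal $\langle S\rangle$ is the defining ideal of a union of lines and ACM points (allowing the cases where it consists only of lines or only of points).
   Context: $R=\mathbb{C}[x_0,x_1,y_0,y_1]$ is bigraded with $\deg x_i=(1,0)$, $\deg y_i=(0,1)$. For $A=[a_0:a_1]\in\mathbb{P}^1$ let $H_A=a_1x_0-a_0x_1$ and for $B=[b_0:b_1]$ let $V_B=b_1y_0-b_0y_1$; the same symbol denotes the form and its zero set (horizontal, resp. vertical, line or ruling). $I_{A\times B}=\langle H_A,V_B\rangle$, $I_{\mathbb{X}}=\bigcap_{P\in\mathbb{X}}I_P$, and a finite set $\mathbb{X}$ is ACM if $R/I_{\mathbb{X}}$ is Cohen–Macaulay. A union of lines and points is $\mathbb{W}=\{P_1,\dots,P_r,H_1,\dots,H_t,V_1,\dots,V_p\}$ (distinct points, horizontal lines and vertical lines, no point on any of the lines), with $\mathbb{X}_{\mathbb{W}}=\{P_1,\dots,P_r\}$ and $I_{\mathbb{W}}=\bigcap_iI_{P_i}\cap\bigcap_i\langle H_i\rangle\cap\bigcap_j\langle V_j\rangle$; it is a union of lines and ACM points if $\mathbb{X}_{\mathbb{W}}$ is ACM. For ACM $\mathbb{X}$ with $\pi_1(\mathbb{X})=\{A_1,\dots,A_h\}$, $\pi_2(\mathbb{X})=\{B_1,\dots,B_v\}$,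 labelled so that $\alpha_i=|\{P\in\mathbb{X}:P\in H_{A_i}\}|$ satisfies $\alpha_1\ge\cdots\ge\alpha_h$ and the counts on $V_{B_j}$ are nonincreasing, $I_{\mathbb{X}}$ is minimally generated by $\{H_{A_1}\cdots H_{A_h},\ V_{B_1}\cdots V_{B_v}\}\cup\{H_{A_1}\cdots H_{A_i}V_{B_1}\cdots V_{B_{\alpha_{i+1}}}:\alpha_{i+1}<\alpha_i\}$ (unique up to nonzero scalars). The standard generating set of $I_{\mathbb{W}}$ is this set for $\mathbb{X}=\mathbb{X}_{\mathbb{W}}$, each element multiplied by $\Lambda=\prod_iH_i\prod_jV_j$ (and $\{\Lambda\}$ if $\mathbb{X}_{\mathbb{W}}=\emptyset$); it is a minimal generating set of $I_{\mathbb{W}}$. *)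

theory Defs
  imports Complex_Main "HOL-Library.Poly_Mapping"
begin

datatype var = X0 | X1 | Y0 | Y1

type_synonym R = "(var \<Rightarrow>\<^sub>0 nat) \<Rightarrow>\<^sub>0 complex"

definition pvar :: "var \<Rightarrow> R" where
  "pvar v = Poly_Mapping.single (Poly_Mapping.single v 1) 1"

definition pconst :: "complex \<Rightarrow> R" where
  "pconst c = Poly_Mapping.single 0 c"

definition ideal_gen :: "R set \<Rightarrow> R set" where
  "ideal_gen S = {p. \<exists>F r. finite F \<and> F \<subseteq> S \<and> p = (\<Sum>f\<in>F. r f * f)}"

text \<open>A point of P^1 is encoded by its normalized homogeneous coordinates:
  None is [0:1] and Some t is [1:t]. This is a bijection with P^1(C).\<close>
type_synonym p1 = "complex option"

definition coords :: "p1 \<Rightarrow> complex \<times> complex" where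
  "coords A = (case A of None \<Rightarrow> (0, 1) | Some t \<Rightarrow> (1, t))"

definition Hform :: "p1 \<Rightarrow> R" where
  "Hform A = pconst (snd (coords A)) * pvar X0 - pconst (fst (coords A)) * pvar X1"

definition Vform :: "p1 \<Rightarrow> R" where
  "Vform B = pconst (snd (coords B)) * pvar Y0 - pconst (fst (coords B)) * pvar Y1"

definition I_pt :: "p1 \<times> p1 \<Rightarrow> R set" where
  "I_pt P = ideal_gen {Hform (fst P), Vform (snd P)}"

definition I_X :: "(p1 \<times> p1) set \<Rightarrow> R set" where
  "I_X X = {p. \<forall>P\<in>X. p \<in> I_pt P}"

definition irrel :: "R set" where
  "irrel = ideal_gen {pvar X0, pvar X1, pvar Y0, pvar Y1}"

definition regular_seq2 :: "R set \<Rightarrow> R \<Rightarrow> R \<Rightarrow> bool" where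
  "regular_seq2 I f1 f2 \<longleftrightarrow>
     f1 \<in> irrel \<and> f2 \<in> irrel \<and>
     (\<forall>g. f1 * g \<in> I \<longrightarrow> g \<in> I) \<and>
     (\<forall>g. f2 * g \<in> ideal_gen (I \<union> {f1}) \<longrightarrow> g \<in> ideal_gen (I \<union> {f1})) \<and>
     1 \<notin> ideal_gen (I \<union> {f1, f2})"

text \<open>R/I_X is Cohen-Macaulay. For a nonempty finite set of points of P^1 x P^1,
  dim R/I_X = 2, so CM means depth_m(R/I_X) >= 2, i.e. there is an R/I_X-regular
  sequence of length 2 in m. For the empty set R/I_X = 0 (CM by convention).\<close>
definition ACM :: "(p1 \<times> p1) set \<Rightarrow> bool" where
  "ACM X \<longleftrightarrow> finite X \<and> (X = {} \<or> (\<exists>f1 f2. regular_seq2 (I_X X) f1 f2))"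

record ULP =
  pts :: "(p1 \<times> p1) set"
  hlines :: "p1 set"
  vlines :: "p1 set"

definition is_ULP :: "ULP \<Rightarrow> bool" where
  "is_ULP W \<longleftrightarrow> finite (pts W) \<and> finite (hlines W) \<and> finite (vlines W) \<and>
     (\<forall>P\<in>pts W. fst P \<notin> hlines W \<and> snd P \<notin> vlines W)"

definition is_ULACM :: "ULP \<Rightarrow> bool" where
  "is_ULACM W \<longleftrightarrow> is_ULP W \<and> ACM (pts W)"

definition I_W :: "ULP \<Rightarrow> R set" where
  "I_W W = I_X (pts W) \<inter> {p. (\<forall>A\<in>hlines W. p \<in> ideal_gen {Hform A}) \<and>
                               (\<forall>B\<in>vlines W. p \<in> ideal_gen {Vform B})}"

definition Lambda :: "ULP \<Rightarrow> R" where
  "Lambda W = (\<Prod>A\<in>hlines W. Hform A) * (\<Prod>B\<in>vlines W. Vform B)"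

definition row_count :: "(p1 \<times> p1) set \<Rightarrow> p1 \<Rightarrow> nat" where
  "row_count X A = card {P\<in>X. fst P = A}"

definition col_count :: "(p1 \<times> p1) set \<Rightarrow> p1 \<Rightarrow> nat" where
  "col_count X B = card {P\<in>X. snd P = B}"

definition valid_labelling :: "(p1 \<times> p1) set \<Rightarrow> p1 list \<Rightarrow> p1 list \<Rightarrow> bool" where
  "valid_labelling X as bs \<longleftrightarrow>
     distinct as \<and> set as = fst ` X \<and> sorted_wrt (\<ge>) (map (row_count X) as) \<and>
     distinct bs \<and> set bs = snd ` X \<and> sorted_wrt (\<ge>) (map (col_count X) bs)"

text \<open>Generators of I_X (indices 0-based: as!k is A_(k+1)).\<close>
definition gens_X :: "(p1 \<times> p1) set \<Rightarrow> p1 list \<Rightarrow> p1 list \<Rightarrow> R set" where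
  "gens_X X as bs =
     {(\<Prod>k<length as. Hform (as!k)), (\<Prod>k<length bs. Vform (bs!k))} \<union>
     {(\<Prod>k<i. Hform (as!k)) * (\<Prod>k<row_count X (as!i). Vform (bs!k)) | i.
        1 \<le> i \<and> i < length as \<and> row_count X (as!i) < row_count X (as!(i-1))}"

text \<open>Standard generating set of I_W (for X_W empty this is {Lambda}).\<close>
definition std_gens :: "ULP \<Rightarrow> p1 list \<Rightarrow> p1 list \<Rightarrow> R set" where
  "std_gens W as bs = (\<lambda>g. Lambda W * g) ` gens_X (pts W) as bs"

end

theory Submission
  imports Defs
begin

fun var_rank :: "var \<Rightarrow> nat" where
  "var_rank X0 = 0" | "var_rank X1 = 1" | "var_rank Y0 = 2" | "var_rank Y1 = 3"

lemma var_rank_inj: "var_rank a = var_rank b \<Longrightarrow> a = b"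
  by (cases a; cases b; simp)

lemma UNIV_var: "(UNIV :: var set) = {X0, X1, Y0, Y1}"
  using var.exhaust by auto

instantiation var :: linorder
begin
definition less_eq_var :: "var \<Rightarrow> var \<Rightarrow> bool" where "less_eq_var a b \<longleftrightarrow> var_rank a \<le> var_rank b"
definition less_var :: "var \<Rightarrow> var \<Rightarrow> bool" where "less_var a b \<longleftrightarrow> var_rank a < var_rank b"
instance
  by standard (auto simp: less_eq_var_def less_var_def intro: var_rank_inj)
end

instance var :: finite
  by standard (simp add: UNIV_var)



section \<open>Ideals\<close>

definition is_ideal :: "R set \<Rightarrow> bool" where
  "is_ideal I \<longleftrightarrow> 0 \<in> I \<and> (\<forall>a\<in>I. \<forall>b\<in>I. a + b \<in> I) \<and> (\<forall>a\<in>I. \<forall>r. r * a \<in> I)"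

lemma ideal_0: "is_ideal I \<Longrightarrow> 0 \<in> I" by (simp add: is_ideal_def)
lemma ideal_add: "is_ideal I \<Longrightarrow> a \<in> I \<Longrightarrow> b \<in> I \<Longrightarrow> a + b \<in> I" by (simp add: is_ideal_def)
lemma ideal_multL: "is_ideal I \<Longrightarrow> a \<in> I \<Longrightarrow> r * a \<in> I" by (simp add: is_ideal_def)
lemma ideal_multR: "is_ideal I \<Longrightarrow> a \<in> I \<Longrightarrow> a * r \<in> I"
  using ideal_multL[of I a r] by (simp add: mult.commute)
lemma ideal_uminus: "is_ideal I \<Longrightarrow> a \<in> I \<Longrightarrow> - a \<in> I"
  using ideal_multL[of I a "-1"] by simp
lemma ideal_diff: "is_ideal I \<Longrightarrow> a \<in> I \<Longrightarrow> b \<in> I \<Longrightarrow> a - b \<in> I"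
  using ideal_add[of I a "-b"] ideal_uminus[of I b] by simp
lemma ideal_sum: "is_ideal I \<Longrightarrow> (\<And>x. x \<in> F \<Longrightarrow> g x \<in> I) \<Longrightarrow> sum g F \<in> I"
  by (induction F rule: infinite_finite_induct) (auto simp: ideal_0 ideal_add)

lemma ideal_gen_is_ideal: "is_ideal (ideal_gen S)"
  unfolding is_ideal_def
proof (intro conjI ballI allI)
  show "0 \<in> ideal_gen S" unfolding ideal_gen_def
    by (rule CollectI, rule exI[of _ "{}"]) auto
next
  fix a b assume a: "a \<in> ideal_gen S" and b: "b \<in> ideal_gen S"
  then obtain F1 r1 F2 r2 where f: "finite F1" "F1 \<subseteq> S" "a = (\<Sum>f\<in>F1. r1 f * f)"
    "finite F2" "F2 \<subseteq> S" "b = (\<Sum>f\<in>F2. r2 f * f)"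
    unfolding ideal_gen_def by blast
  define r where "r f = (if f \<in> F1 then r1 f else 0) + (if f \<in> F2 then r2 f else 0)" for f
  have "(\<Sum>f\<in>F1 \<union> F2. r f * f) = (\<Sum>f\<in>F1 \<union> F2. (if f \<in> F1 then r1 f * f else 0) + (if f \<in> F2 then r2 f * f else 0))"
    unfolding r_def by (rule sum.cong) (auto simp: distrib_right)
  also have "\<dots> = (\<Sum>f\<in>F1 \<union> F2. (if f \<in> F1 then r1 f * f else 0)) + (\<Sum>f\<in>F1 \<union> F2. (if f \<in> F2 then r2 f * f else 0))"
    by (rule sum.distrib)
  also have "\<dots> = a + b"
    using f by (simp add: sum.If_cases Int_absorb1)
  finally show "a + b \<in> ideal_gen S" unfolding ideal_gen_def using f
    by (intro CollectI exI[of _ "F1 \<union> F2"] exI[of _ r]) auto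
next
  fix a r assume "a \<in> ideal_gen S"
  then obtain F r1 where f: "finite F" "F \<subseteq> S" "a = (\<Sum>f\<in>F. r1 f * f)"
    unfolding ideal_gen_def by blast
  have "r * a = (\<Sum>f\<in>F. (r * r1 f) * f)" using f by (simp add: sum_distrib_left mult.assoc)
  then show "r * a \<in> ideal_gen S" unfolding ideal_gen_def using f
    by (intro CollectI exI[of _ F] exI[of _ "\<lambda>f. r * r1 f"]) simp
qed

lemma ideal_gen_base: "s \<in> S \<Longrightarrow> s \<in> ideal_gen S"
  unfolding ideal_gen_def by (rule CollectI, rule exI[of _ "{s}"], rule exI[of _ "\<lambda>_. 1"]) auto

lemma ideal_gen_least: "is_ideal J \<Longrightarrow> S \<subseteq> J \<Longrightarrow> ideal_gen S \<subseteq> J"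
  unfolding ideal_gen_def by (auto intro!: ideal_sum ideal_multL)

lemma ideal_gen_mono: "S \<subseteq> T \<Longrightarrow> ideal_gen S \<subseteq> ideal_gen T"
  by (meson ideal_gen_base ideal_gen_is_ideal ideal_gen_least subset_iff)

lemmas ig = ideal_gen_is_ideal
lemma ig_add: "a \<in> ideal_gen S \<Longrightarrow> b \<in> ideal_gen S \<Longrightarrow> a + b \<in> ideal_gen S" by (rule ideal_add[OF ig])
lemma ig_diff: "a \<in> ideal_gen S \<Longrightarrow> b \<in> ideal_gen S \<Longrightarrow> a - b \<in> ideal_gen S" by (rule ideal_diff[OF ig])
lemma ig_multL: "a \<in> ideal_gen S \<Longrightarrow> r * a \<in> ideal_gen S" by (rule ideal_multL[OF ig])
lemma ig_multR: "a \<in> ideal_gen S \<Longrightarrow> a * r \<in> ideal_gen S" by (rule ideal_multR[OF ig])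
lemma ig_uminus: "a \<in> ideal_gen S \<Longrightarrow> - a \<in> ideal_gen S" by (rule ideal_uminus[OF ig])
lemma ig_0: "0 \<in> ideal_gen S" by (rule ideal_0[OF ig])
lemma ig_sum: "(\<And>x. x \<in> F \<Longrightarrow> g x \<in> ideal_gen S) \<Longrightarrow> sum g F \<in> ideal_gen S" by (rule ideal_sum[OF ig])

lemma ideal_gen_insert:
  "ideal_gen (insert x S) = {k + c * x | k c. k \<in> ideal_gen S}"
proof
  let ?J = "{k + c * x | k c. k \<in> ideal_gen S}"
  have "is_ideal ?J" unfolding is_ideal_def
  proof (intro conjI ballI allI)
    show "0 \<in> ?J" by (rule CollectI, rule exI[of _ 0], rule exI[of _ 0]) (simp add: ig_0)
  next
    fix a b assume "a \<in> ?J" "b \<in> ?J"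
    then obtain k1 c1 k2 c2 where "a = k1 + c1 * x" "k1 \<in> ideal_gen S" "b = k2 + c2 * x" "k2 \<in> ideal_gen S" by blast
    then show "a + b \<in> ?J"
      by (intro CollectI exI[of _ "k1 + k2"] exI[of _ "c1 + c2"]) (auto simp: ig_add algebra_simps)
  next
    fix a r assume "a \<in> ?J"
    then obtain k1 c1 where "a = k1 + c1 * x" "k1 \<in> ideal_gen S" by blast
    then have "r * a = r * k1 + (r * c1) * x" by (simp add: algebra_simps)
    moreover have "r * k1 \<in> ideal_gen S" using \<open>k1 \<in> ideal_gen S\<close> by (rule ig_multL)
    ultimately show "r * a \<in> ?J" by blast
  qed
  moreover have "insert x S \<subseteq> ?J"
  proof
    fix y assume "y \<in> insert x S"
    then show "y \<in> ?J"
    proof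
      assume "y = x" then show ?thesis by (intro CollectI exI[of _ 0] exI[of _ 1]) (simp add: ig_0)
    next
      assume "y \<in> S" then show ?thesis by (intro CollectI exI[of _ y] exI[of _ 0]) (simp add: ideal_gen_base)
    qed
  qed
  ultimately show "ideal_gen (insert x S) \<subseteq> ?J" by (rule ideal_gen_least)
next
  show "{k + c * x | k c. k \<in> ideal_gen S} \<subseteq> ideal_gen (insert x S)"
  proof
    fix z assume "z \<in> {k + c * x | k c. k \<in> ideal_gen S}"
    then obtain k c where z: "z = k + c * x" "k \<in> ideal_gen S" by blast
    have "k \<in> ideal_gen (insert x S)" using z(2) ideal_gen_mono[of S "insert x S"] by blast
    moreover have "c * x \<in> ideal_gen (insert x S)" by (rule ig_multL, rule ideal_gen_base) simp
    ultimately show "z \<in> ideal_gen (insert x S)" unfolding z by (rule ig_add)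
  qed
qed

lemma ideal_gen_empty: "ideal_gen {} = {0}"
  using ideal_gen_insert[of 0 "{}"] ig_0[of "{}"] ideal_gen_least[of "{0}" "{}"]
  by (auto simp: is_ideal_def)

lemma ideal_gen_single: "ideal_gen {x} = {c * x | c. True}"
  using ideal_gen_insert[of x "{}"] by (simp add: ideal_gen_empty)

lemma ideal_gen_pair: "ideal_gen {x, y} = {a * x + b * y | a b. True}"
proof -
  have "ideal_gen {x, y} = {k + c * x | k c. k \<in> {c * y | c. True}}"
    unfolding ideal_gen_insert[of x "{y}"] ideal_gen_single ..
  also have "\<dots> = {a * x + b * y | a b. True}"
  proof (intro set_eqI iffI)
    fix z assume "z \<in> {k + c * x | k c. k \<in> {c * y | c. True}}"
    then obtain c d where "z = d * y + c * x" by blast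
    then have "z = c * x + d * y" by (simp add: add.commute)
    then show "z \<in> {a * x + b * y | a b. True}" by blast
  next
    fix z assume "z \<in> {a * x + b * y | a b. True}"
    then obtain c d where "z = c * x + d * y" by blast
    then have "z = d * y + c * x" by (simp add: add.commute)
    then show "z \<in> {k + c * x | k c. k \<in> {c * y | c. True}}" by blast
  qed
  finally show ?thesis .
qed

lemma ideal_gen_one: "1 \<in> ideal_gen S \<Longrightarrow> ideal_gen S = UNIV"
  using ig_multR[of 1 S] by auto

lemma ideal_gen_image_mult:
  "ideal_gen ((\<lambda>g. c * g) ` S) = (\<lambda>g. c * g) ` ideal_gen S"
proof
  have "is_ideal ((\<lambda>g. c * g) ` ideal_gen S)" unfolding is_ideal_def
  proof (intro conjI ballI allI)
    show "0 \<in> (*) c ` ideal_gen S" by (rule image_eqI[of _ _ 0]) (simp_all add: ig_0)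
  next
    fix a b assume "a \<in> (*) c ` ideal_gen S" "b \<in> (*) c ` ideal_gen S"
    then obtain a' b' where "a = c * a'" "b = c * b'" "a' \<in> ideal_gen S" "b' \<in> ideal_gen S" by blast
    then have "a + b = c * (a' + b')" "a' + b' \<in> ideal_gen S" by (simp_all add: distrib_left ig_add)
    then show "a + b \<in> (*) c ` ideal_gen S" by (rule image_eqI)
  next
    fix a r assume "a \<in> (*) c ` ideal_gen S"
    then obtain a' where "a = c * a'" "a' \<in> ideal_gen S" by blast
    then have "r * a = c * (r * a')" "r * a' \<in> ideal_gen S" by (simp_all add: ig_multL mult.left_commute)
    then show "r * a \<in> (*) c ` ideal_gen S" by (rule image_eqI)
  qed
  moreover have "(*) c ` S \<subseteq> (*) c ` ideal_gen S" using ideal_gen_base by blast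
  ultimately show "ideal_gen ((*) c ` S) \<subseteq> (*) c ` ideal_gen S"
    by (rule ideal_gen_least)
next
  have "is_ideal {g. c * g \<in> ideal_gen ((*) c ` S)}" unfolding is_ideal_def
  proof (intro conjI ballI allI)
    show "0 \<in> {g. c * g \<in> ideal_gen ((*) c ` S)}" by (simp add: ig_0)
  next
    fix a b assume "a \<in> {g. c * g \<in> ideal_gen ((*) c ` S)}" "b \<in> {g. c * g \<in> ideal_gen ((*) c ` S)}"
    then show "a + b \<in> {g. c * g \<in> ideal_gen ((*) c ` S)}" by (simp add: distrib_left ig_add)
  next
    fix a r assume "a \<in> {g. c * g \<in> ideal_gen ((*) c ` S)}"
    then have "r * (c * a) \<in> ideal_gen ((*) c ` S)" by (simp add: ig_multL)
    then show "r * a \<in> {g. c * g \<in> ideal_gen ((*) c ` S)}" by (simp add: mult.left_commute)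
  qed
  moreover have "S \<subseteq> {g. c * g \<in> ideal_gen ((*) c ` S)}"
    using ideal_gen_base by blast
  ultimately have "ideal_gen S \<subseteq> {g. c * g \<in> ideal_gen ((*) c ` S)}"
    by (rule ideal_gen_least)
  then show "(*) c ` ideal_gen S \<subseteq> ideal_gen ((*) c ` S)" by auto
qed


lemma pconst_add: "pconst (a + b) = pconst a + pconst b"
  by (simp add: pconst_def single_add)
lemma pconst_mult: "pconst (a * b) = pconst a * pconst b"
  by (simp add: pconst_def mult_single)
lemma pconst_diff: "pconst (a - b) = pconst a - pconst b"
  by (simp add: pconst_def single_diff)
lemma pconst_uminus: "pconst (- a) = - pconst a"
  by (simp add: pconst_def single_uminus)
lemma pconst_0[simp]: "pconst 0 = 0" by (simp add: pconst_def)
lemma pconst_1[simp]: "pconst 1 = 1" by (simp add: pconst_def)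
lemma pconst_eq_0_iff[simp]: "pconst c = 0 \<longleftrightarrow> c = 0"
  by (metis pconst_def lookup_single_eq lookup_zero single_zero)
lemma pvar_neq_0[simp]: "pvar v \<noteq> 0"
  by (metis pvar_def lookup_single_eq lookup_zero one_neq_zero)

section \<open>Substitution homomorphism\<close>

definition mono_eval :: "(var \<Rightarrow> R) \<Rightarrow> (var \<Rightarrow>\<^sub>0 nat) \<Rightarrow> R" where
  "mono_eval \<sigma> m = (\<Prod>v\<in>UNIV. \<sigma> v ^ Poly_Mapping.lookup m v)"

lemma mono_eval_add: "mono_eval \<sigma> (m + n) = mono_eval \<sigma> m * mono_eval \<sigma> n"
  by (simp add: mono_eval_def lookup_add power_add prod.distrib)

lemma mono_eval_0[simp]: "mono_eval \<sigma> 0 = 1"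
  by (simp add: mono_eval_def)

definition subst :: "(var \<Rightarrow> R) \<Rightarrow> R \<Rightarrow> R" where
  "subst \<sigma> p = (\<Sum>m\<in>Poly_Mapping.keys p. pconst (Poly_Mapping.lookup p m) * mono_eval \<sigma> m)"

lemma subst_superset:
  assumes "finite M" "Poly_Mapping.keys p \<subseteq> M"
  shows "subst \<sigma> p = (\<Sum>m\<in>M. pconst (Poly_Mapping.lookup p m) * mono_eval \<sigma> m)"
  unfolding subst_def
  by (rule sum.mono_neutral_left) (use assms in \<open>auto simp: in_keys_iff\<close>)

lemma subst_add: "subst \<sigma> (p + q) = subst \<sigma> p + subst \<sigma> q"
proof -
  let ?M = "Poly_Mapping.keys p \<union> Poly_Mapping.keys q"
  have k: "Poly_Mapping.keys (p + q) \<subseteq> ?M" by (rule keys_add)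
  have "subst \<sigma> (p + q) = (\<Sum>m\<in>?M. pconst (Poly_Mapping.lookup (p + q) m) * mono_eval \<sigma> m)"
    by (rule subst_superset) (use k in auto)
  also have "\<dots> = (\<Sum>m\<in>?M. pconst (Poly_Mapping.lookup p m) * mono_eval \<sigma> m) + (\<Sum>m\<in>?M. pconst (Poly_Mapping.lookup q m) * mono_eval \<sigma> m)"
    by (simp add: lookup_add pconst_add distrib_right sum.distrib)
  also have "\<dots> = subst \<sigma> p + subst \<sigma> q"
    by (simp add: subst_superset[symmetric])
  finally show ?thesis .
qed

lemma subst_0[simp]: "subst \<sigma> 0 = 0" by (simp add: subst_def)

lemma subst_sum: "subst \<sigma> (sum f A) = (\<Sum>a\<in>A. subst \<sigma> (f a))"
  by (induction A rule: infinite_finite_induct) (simp_all add: subst_add)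

lemma subst_single: "subst \<sigma> (Poly_Mapping.single m c) = pconst c * mono_eval \<sigma> m"
  by (cases "c = 0") (simp_all add: subst_def)

lemma poly_repr: "(p :: 'a \<Rightarrow>\<^sub>0 'b::comm_monoid_add) = (\<Sum>m\<in>Poly_Mapping.keys p. Poly_Mapping.single m (Poly_Mapping.lookup p m))"
  by (rule poly_mapping_eqI) (simp add: lookup_sum lookup_single when_def in_keys_iff)

lemma subst_mult: "subst \<sigma> (p * q) = subst \<sigma> p * subst \<sigma> q"
proof -
  have "p * q = (\<Sum>m\<in>Poly_Mapping.keys p. Poly_Mapping.single m (Poly_Mapping.lookup p m)) * (\<Sum>n\<in>Poly_Mapping.keys q. Poly_Mapping.single n (Poly_Mapping.lookup q n))"
    using poly_repr[of p] poly_repr[of q] by simp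
  also have "\<dots> = (\<Sum>m\<in>Poly_Mapping.keys p. \<Sum>n\<in>Poly_Mapping.keys q. Poly_Mapping.single (m + n) (Poly_Mapping.lookup p m * Poly_Mapping.lookup q n))"
    by (simp add: sum_distrib_left sum_distrib_right mult_single) (rule sum.swap)
  finally have pq: "p * q = \<dots>" .
  have "subst \<sigma> (p * q) = (\<Sum>m\<in>Poly_Mapping.keys p. \<Sum>n\<in>Poly_Mapping.keys q. (pconst (Poly_Mapping.lookup p m) * mono_eval \<sigma> m) * (pconst (Poly_Mapping.lookup q n) * mono_eval \<sigma> n))"
    unfolding pq by (simp add: subst_sum subst_single mono_eval_add pconst_mult mult_ac)
  also have "\<dots> = subst \<sigma> p * subst \<sigma> q"
    by (simp add: subst_def sum_distrib_left sum_distrib_right) (rule sum.swap)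
  finally show ?thesis .
qed

lemma subst_uminus: "subst \<sigma> (- p) = - subst \<sigma> p"
  using subst_add[of \<sigma> p "- p"] by (simp add: eq_neg_iff_add_eq_0 add.commute)

lemma subst_diff: "subst \<sigma> (p - q) = subst \<sigma> p - subst \<sigma> q"
  using subst_add[of \<sigma> p "- q"] by (simp add: subst_uminus)

lemma subst_pconst[simp]: "subst \<sigma> (pconst c) = pconst c"
  unfolding pconst_def subst_single by (simp add: pconst_def[symmetric])

lemma subst_1[simp]: "subst \<sigma> 1 = 1"
  using subst_pconst[of \<sigma> 1] by simp

lemma subst_pvar[simp]: "subst \<sigma> (pvar v) = \<sigma> v"
proof -
  have "mono_eval \<sigma> (Poly_Mapping.single v 1) = \<sigma> v"
    unfolding mono_eval_def lookup_single
    by (subst prod.remove[of _ v]) (auto simp: when_def)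
  then show ?thesis unfolding pvar_def subst_single by simp
qed

lemma subst_prod: "subst \<sigma> (prod f A) = (\<Prod>a\<in>A. subst \<sigma> (f a))"
  by (induction A rule: infinite_finite_induct) (simp_all add: subst_mult)

lemma subst_power: "subst \<sigma> (p ^ n) = subst \<sigma> p ^ n"
  by (induction n) (simp_all add: subst_mult)

lemmas subst_simps = subst_add subst_mult subst_diff subst_uminus subst_prod subst_power subst_sum

lemma single_pow: "(Poly_Mapping.single (Poly_Mapping.single v (1::nat)) (1::complex)) ^ n = Poly_Mapping.single (Poly_Mapping.single v n) 1"
proof (induction n)
  case 0 then show ?case by simp
next
  case (Suc n)
  have "Poly_Mapping.single (Poly_Mapping.single v (1::nat)) (1::complex) * Poly_Mapping.single (Poly_Mapping.single v n) 1
     = Poly_Mapping.single (Poly_Mapping.single v (Suc n)) 1"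
    by (simp add: mult_single single_add[symmetric])
  then show ?case using Suc by simp
qed

lemma prod_single: "finite A \<Longrightarrow> (\<Prod>v\<in>A. Poly_Mapping.single (f v) (1::complex)) = Poly_Mapping.single (\<Sum>v\<in>A. f v) 1"
  by (induction A rule: finite_induct) (simp_all add: mult_single)

lemma sum_single_var: "(\<Sum>v\<in>(UNIV::var set). Poly_Mapping.single v (Poly_Mapping.lookup m v)) = m"
  by (rule poly_mapping_eqI) (simp add: lookup_sum lookup_single when_def)

lemma mono_eval_pvar: "mono_eval pvar m = Poly_Mapping.single m 1"
proof -
  have "mono_eval pvar m = (\<Prod>v\<in>UNIV. Poly_Mapping.single (Poly_Mapping.single v (Poly_Mapping.lookup m v)) 1)"
    unfolding mono_eval_def pvar_def single_pow ..
  also have "\<dots> = Poly_Mapping.single m 1"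
    by (simp add: prod_single sum_single_var)
  finally show ?thesis .
qed

lemma subst_pvar_id: "subst pvar p = p"
proof -
  have "subst pvar p = (\<Sum>m\<in>Poly_Mapping.keys p. Poly_Mapping.single m (Poly_Mapping.lookup p m))"
    unfolding subst_def mono_eval_pvar pconst_def by (simp add: mult_single)
  also have "\<dots> = p" by (rule poly_repr[symmetric])
  finally show ?thesis .
qed


lemma cong_mult: "is_ideal I \<Longrightarrow> x - y \<in> I \<Longrightarrow> u - w \<in> I \<Longrightarrow> x * u - y * w \<in> I"
proof -
  assume I: "is_ideal I" and a: "x - y \<in> I" and b: "u - w \<in> I"
  have "x * u - y * w = x * (u - w) + (x - y) * w" by (simp add: algebra_simps)
  then show ?thesis using I a b by (simp add: ideal_add ideal_multL ideal_multR)
qed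

lemma cong_pow: "is_ideal I \<Longrightarrow> x - y \<in> I \<Longrightarrow> x ^ n - y ^ n \<in> I"
  by (induction n) (simp_all add: ideal_0 cong_mult)

lemma cong_prod: "is_ideal I \<Longrightarrow> (\<And>v. v \<in> A \<Longrightarrow> a v - b v \<in> I) \<Longrightarrow> prod a A - prod b A \<in> I"
  by (induction A rule: infinite_finite_induct) (simp_all add: ideal_0 cong_mult)

lemma subst_cong:
  assumes "\<And>v. pvar v - \<sigma> v \<in> ideal_gen G"
  shows "p - subst \<sigma> p \<in> ideal_gen G"
proof -
  have "p - subst \<sigma> p = subst pvar p - subst \<sigma> p" by (simp add: subst_pvar_id)
  also have "\<dots> = (\<Sum>m\<in>Poly_Mapping.keys p. pconst (Poly_Mapping.lookup p m) * (mono_eval pvar m - mono_eval \<sigma> m))"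
    by (simp add: subst_def sum_subtractf right_diff_distrib)
  also have "\<dots> \<in> ideal_gen G"
    unfolding mono_eval_def
    by (intro ig_sum ig_multL cong_prod[OF ig] cong_pow[OF ig] assms)
  finally show ?thesis .
qed

lemma kernel_char:
  assumes "\<And>v. pvar v - \<sigma> v \<in> ideal_gen G" "\<And>g. g \<in> G \<Longrightarrow> subst \<sigma> g = 0"
  shows "p \<in> ideal_gen G \<longleftrightarrow> subst \<sigma> p = 0"
proof
  have "is_ideal {p. subst \<sigma> p = 0}" unfolding is_ideal_def
    by (simp add: subst_add subst_mult)
  then have "ideal_gen G \<subseteq> {p. subst \<sigma> p = 0}"
    by (rule ideal_gen_least) (use assms(2) in auto)
  then show "p \<in> ideal_gen G \<Longrightarrow> subst \<sigma> p = 0" by blast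
next
  assume "subst \<sigma> p = 0"
  then show "p \<in> ideal_gen G" using subst_cong[of \<sigma> G p, OF assms(1)] by simp
qed

lemma kernel_prime:
  assumes "\<And>v. pvar v - \<sigma> v \<in> ideal_gen G" "\<And>g. g \<in> G \<Longrightarrow> subst \<sigma> g = 0"
  shows "p * q \<in> ideal_gen G \<Longrightarrow> p \<in> ideal_gen G \<or> q \<in> ideal_gen G"
  using kernel_char[OF assms] by (simp add: subst_mult)

lemma Hform_None: "Hform None = pvar X0"
  by (simp add: Hform_def coords_def)
lemma Hform_Some: "Hform (Some t) = pconst t * pvar X0 - pvar X1"
  by (simp add: Hform_def coords_def)
lemma Vform_None: "Vform None = pvar Y0"
  by (simp add: Vform_def coords_def)
lemma Vform_Some: "Vform (Some t) = pconst t * pvar Y0 - pvar Y1"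
  by (simp add: Vform_def coords_def)

definition sx :: "p1 \<Rightarrow> var \<Rightarrow> R" where
  "sx A v = (case A of None \<Rightarrow> (if v = X0 then 0 else pvar v)
                     | Some t \<Rightarrow> (if v = X1 then pconst t * pvar X0 else pvar v))"
definition sy :: "p1 \<Rightarrow> var \<Rightarrow> R" where
  "sy B v = (case B of None \<Rightarrow> (if v = Y0 then 0 else pvar v)
                     | Some t \<Rightarrow> (if v = Y1 then pconst t * pvar Y0 else pvar v))"

definition spt :: "p1 \<Rightarrow> p1 \<Rightarrow> var \<Rightarrow> R" where
  "spt A B v = (if v = X0 \<or> v = X1 then sx A v else sy B v)"
definition sz :: "p1 \<Rightarrow> var \<Rightarrow> R" where
  "sz B v = (if v = X0 \<or> v = X1 then 0 else sy B v)"

lemma sx_diff: "pvar v - sx A v = (if A = None \<and> v = X0 then Hform A else if A \<noteq> None \<and> v = X1 then - Hform A else 0)"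
  by (cases A) (auto simp: sx_def Hform_None Hform_Some)
lemma sy_diff: "pvar v - sy B v = (if B = None \<and> v = Y0 then Vform B else if B \<noteq> None \<and> v = Y1 then - Vform B else 0)"
  by (cases B) (auto simp: sy_def Vform_None Vform_Some)

lemma sx_in: "Hform A \<in> ideal_gen G \<Longrightarrow> pvar v - sx A v \<in> ideal_gen G"
  unfolding sx_diff by (auto simp: ig_0 ig_uminus)

lemma sy_in: "Vform B \<in> ideal_gen G \<Longrightarrow> pvar v - sy B v \<in> ideal_gen G"
  unfolding sy_diff by (auto simp: ig_0 ig_uminus)

lemma sx_kill: "\<sigma> X0 = sx A X0 \<Longrightarrow> \<sigma> X1 = sx A X1 \<Longrightarrow> subst \<sigma> (Hform A) = 0"
  by (cases A) (simp_all add: sx_def Hform_None Hform_Some subst_simps)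

lemma sy_kill: "\<sigma> Y0 = sy B Y0 \<Longrightarrow> \<sigma> Y1 = sy B Y1 \<Longrightarrow> subst \<sigma> (Vform B) = 0"
  by (cases B) (simp_all add: sy_def Vform_None Vform_Some subst_simps)

lemma pconst_pvar_neq0: "c \<noteq> 0 \<Longrightarrow> pconst c * pvar v \<noteq> 0"
  by simp

lemma sx_nonkill: "A' \<noteq> A \<Longrightarrow> \<sigma> X0 = sx A X0 \<Longrightarrow> \<sigma> X1 = sx A X1 \<Longrightarrow> subst \<sigma> (Hform A') \<noteq> 0"
proof (cases A; cases A')
  fix t t' assume "A' \<noteq> A" "\<sigma> X0 = sx A X0" "\<sigma> X1 = sx A X1" "A = Some t" "A' = Some t'"
  then have "subst \<sigma> (Hform A') = pconst (t' - t) * pvar X0"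
    by (simp add: sx_def Hform_Some subst_simps pconst_diff algebra_simps)
  then show ?thesis using \<open>A' \<noteq> A\<close> \<open>A = Some t\<close> \<open>A' = Some t'\<close> by simp
qed (auto simp: sx_def Hform_None Hform_Some subst_simps)

lemma sy_nonkill: "B' \<noteq> B \<Longrightarrow> \<sigma> Y0 = sy B Y0 \<Longrightarrow> \<sigma> Y1 = sy B Y1 \<Longrightarrow> subst \<sigma> (Vform B') \<noteq> 0"
proof (cases B; cases B')
  fix t t' assume "B' \<noteq> B" "\<sigma> Y0 = sy B Y0" "\<sigma> Y1 = sy B Y1" "B = Some t" "B' = Some t'"
  then have "subst \<sigma> (Vform B') = pconst (t' - t) * pvar Y0"
    by (simp add: sy_def Vform_Some subst_simps pconst_diff algebra_simps)
  then show ?thesis using \<open>B' \<noteq> B\<close> \<open>B = Some t\<close> \<open>B' = Some t'\<close> by simp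
qed (auto simp: sy_def Vform_None Vform_Some subst_simps)

lemma Hform_neq0: "Hform A \<noteq> 0"
proof
  assume "Hform A = 0"
  moreover have "subst (sx (if A = None then Some 0 else None)) (Hform A) \<noteq> 0"
    by (rule sx_nonkill) auto
  ultimately show False by simp
qed

lemma Vform_neq0: "Vform B \<noteq> 0"
proof
  assume "Vform B = 0"
  moreover have "subst (sy (if B = None then Some 0 else None)) (Vform B) \<noteq> 0"
    by (rule sy_nonkill) auto
  ultimately show False by simp
qed

lemma subst_Hform_fix: "\<sigma> X0 = pvar X0 \<Longrightarrow> \<sigma> X1 = pvar X1 \<Longrightarrow> subst \<sigma> (Hform A) = Hform A"
  by (cases A) (simp_all add: Hform_None Hform_Some subst_simps)
lemma subst_Vform_fix: "\<sigma> Y0 = pvar Y0 \<Longrightarrow> \<sigma> Y1 = pvar Y1 \<Longrightarrow> subst \<sigma> (Vform B) = Vform B"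
  by (cases B) (simp_all add: Vform_None Vform_Some subst_simps)

section \<open>Prime ideals\<close>

lemma pt_conds:
  shows "\<And>v. pvar v - spt A B v \<in> ideal_gen {Hform A, Vform B}"
    and "\<And>g. g \<in> {Hform A, Vform B} \<Longrightarrow> subst (spt A B) g = 0"
proof -
  fix v
  have h: "Hform A \<in> ideal_gen {Hform A, Vform B}" "Vform B \<in> ideal_gen {Hform A, Vform B}"
    by (auto intro: ideal_gen_base)
  show "pvar v - spt A B v \<in> ideal_gen {Hform A, Vform B}"
    unfolding spt_def using sx_in[OF h(1)] sy_in[OF h(2)] by simp
next
  fix g assume "g \<in> {Hform A, Vform B}"
  then show "subst (spt A B) g = 0"
    by (auto intro!: sx_kill sy_kill simp: spt_def sx_def sy_def split: option.splits)
qed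

lemma pt_char: "p \<in> ideal_gen {Hform A, Vform B} \<longleftrightarrow> subst (spt A B) p = 0"
  using pt_conds by (rule kernel_char)

lemma I_pt_eq: "I_pt P = ideal_gen {Hform (fst P), Vform (snd P)}"
  by (simp add: I_pt_def)

lemma pt_prime: "p * q \<in> I_pt P \<Longrightarrow> p \<in> I_pt P \<or> q \<in> I_pt P"
  unfolding I_pt_eq using pt_conds by (rule kernel_prime)

lemma pt_H_notin: "A' \<noteq> fst P \<Longrightarrow> Hform A' \<notin> I_pt P"
proof
  assume a: "A' \<noteq> fst P" "Hform A' \<in> I_pt P"
  then have "subst (spt (fst P) (snd P)) (Hform A') = 0"
    using pt_char[of "Hform A'" "fst P" "snd P"] unfolding I_pt_eq by blast
  moreover have "subst (spt (fst P) (snd P)) (Hform A') \<noteq> 0"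
    by (rule sx_nonkill) (use a in \<open>auto simp: spt_def\<close>)
  ultimately show False by simp
qed

lemma pt_V_notin: "B' \<noteq> snd P \<Longrightarrow> Vform B' \<notin> I_pt P"
proof
  assume a: "B' \<noteq> snd P" "Vform B' \<in> I_pt P"
  then have "subst (spt (fst P) (snd P)) (Vform B') = 0"
    using pt_char[of "Vform B'" "fst P" "snd P"] unfolding I_pt_eq by blast
  moreover have "subst (spt (fst P) (snd P)) (Vform B') \<noteq> 0"
    by (rule sy_nonkill) (use a in \<open>auto simp: spt_def sy_def\<close>)
  ultimately show False by simp
qed

lemma pt_H_in: "fst P = A \<Longrightarrow> Hform A \<in> I_pt P"
  unfolding I_pt_eq by (auto intro: ideal_gen_base)
lemma pt_V_in: "snd P = B \<Longrightarrow> Vform B \<in> I_pt P"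
  unfolding I_pt_eq by (auto intro: ideal_gen_base)

lemma H_conds:
  shows "\<And>v. pvar v - sx A v \<in> ideal_gen {Hform A}"
    and "\<And>g. g \<in> {Hform A} \<Longrightarrow> subst (sx A) g = 0"
   apply (rule sx_in, rule ideal_gen_base, simp)
  by (auto intro!: sx_kill)

lemma V_conds:
  shows "\<And>v. pvar v - sy B v \<in> ideal_gen {Vform B}"
    and "\<And>g. g \<in> {Vform B} \<Longrightarrow> subst (sy B) g = 0"
   apply (rule sy_in, rule ideal_gen_base, simp)
  by (auto intro!: sy_kill)

lemma H_char: "p \<in> ideal_gen {Hform A} \<longleftrightarrow> subst (sx A) p = 0"
  using H_conds by (rule kernel_char)
lemma V_char: "p \<in> ideal_gen {Vform B} \<longleftrightarrow> subst (sy B) p = 0"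
  using V_conds by (rule kernel_char)

lemma H_prime: "p * q \<in> ideal_gen {Hform A} \<Longrightarrow> p \<in> ideal_gen {Hform A} \<or> q \<in> ideal_gen {Hform A}"
  using H_conds by (rule kernel_prime)
lemma V_prime: "p * q \<in> ideal_gen {Vform B} \<Longrightarrow> p \<in> ideal_gen {Vform B} \<or> q \<in> ideal_gen {Vform B}"
  using V_conds by (rule kernel_prime)

lemma H_H_notin: "A' \<noteq> A \<Longrightarrow> Hform A' \<notin> ideal_gen {Hform A}"
  using H_char[of "Hform A'" A] sx_nonkill[of A' A "sx A"] by auto
lemma V_V_notin: "B' \<noteq> B \<Longrightarrow> Vform B' \<notin> ideal_gen {Vform B}"
  using V_char[of "Vform B'" B] sy_nonkill[of B' B "sy B"] by auto
lemma V_H_notin: "Vform B \<notin> ideal_gen {Hform A}"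
  using H_char[of "Vform B" A] subst_Vform_fix[of "sx A" B] Vform_neq0[of B]
  by (auto simp: sx_def split: option.splits)
lemma H_V_notin: "Hform A \<notin> ideal_gen {Vform B}"
  using V_char[of "Hform A" B] subst_Hform_fix[of "sy B" A] Hform_neq0[of A]
  by (auto simp: sy_def split: option.splits)

lemma coords_det:
  assumes "A \<noteq> C"
  shows "snd (coords A) * fst (coords C) - fst (coords A) * snd (coords C) \<noteq> 0"
  using assms by (cases A; cases C) (auto simp: coords_def)

lemma x_in_HH:
  assumes "A \<noteq> C"
  shows "pvar X0 \<in> ideal_gen {Hform A, Hform C}" "pvar X1 \<in> ideal_gen {Hform A, Hform C}"
proof -
  obtain a0 a1 where a: "coords A = (a0, a1)" by (cases "coords A")
  obtain c0 c1 where c: "coords C = (c0, c1)" by (cases "coords C")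
  define d where "d = a1 * c0 - a0 * c1"
  have d: "d \<noteq> 0" using coords_det[OF assms] a c by (simp add: d_def)
  have HA: "Hform A = pconst a1 * pvar X0 - pconst a0 * pvar X1" using a by (simp add: Hform_def)
  have HC: "Hform C = pconst c1 * pvar X0 - pconst c0 * pvar X1" using c by (simp add: Hform_def)
  have e0: "pvar X0 = pconst (1 / d) * (pconst c0 * Hform A - pconst a0 * Hform C)"
  proof -
    have "pconst c0 * Hform A - pconst a0 * Hform C = pconst d * pvar X0"
      unfolding HA HC d_def by (simp add: pconst_diff pconst_mult algebra_simps)
    then have "pconst (1 / d) * (pconst c0 * Hform A - pconst a0 * Hform C) = pconst (1/d * d) * pvar X0"
      by (simp only: pconst_mult mult.assoc)
    moreover have "pconst (1/d * d) = 1" using d by simp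
    ultimately show ?thesis by simp
  qed
  have e1: "pvar X1 = pconst (1 / d) * (pconst c1 * Hform A - pconst a1 * Hform C)"
  proof -
    have "pconst c1 * Hform A - pconst a1 * Hform C = pconst d * pvar X1"
      unfolding HA HC d_def by (simp add: pconst_diff pconst_mult algebra_simps)
    then have "pconst (1 / d) * (pconst c1 * Hform A - pconst a1 * Hform C) = pconst (1/d * d) * pvar X1"
      by (simp only: pconst_mult mult.assoc)
    moreover have "pconst (1/d * d) = 1" using d by simp
    ultimately show ?thesis by simp
  qed
  show "pvar X0 \<in> ideal_gen {Hform A, Hform C}"
    by (subst e0) (intro ig_multL ig_diff; rule ideal_gen_base; simp)
  show "pvar X1 \<in> ideal_gen {Hform A, Hform C}"
    by (subst e1) (intro ig_multL ig_diff; rule ideal_gen_base; simp)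
qed

lemma z_conds:
  assumes "A \<noteq> C"
  shows "\<And>v. pvar v - sz B v \<in> ideal_gen {Hform A, Hform C, Vform B}"
    and "\<And>g. g \<in> {Hform A, Hform C, Vform B} \<Longrightarrow> subst (sz B) g = 0"
proof -
  fix v
  have "pvar X0 \<in> ideal_gen {Hform A, Hform C, Vform B}" "pvar X1 \<in> ideal_gen {Hform A, Hform C, Vform B}"
    using x_in_HH[OF assms] ideal_gen_mono[of "{Hform A, Hform C}" "{Hform A, Hform C, Vform B}"] by auto
  moreover have "Vform B \<in> ideal_gen {Hform A, Hform C, Vform B}" by (rule ideal_gen_base) simp
  ultimately show "pvar v - sz B v \<in> ideal_gen {Hform A, Hform C, Vform B}"
    unfolding sz_def using sy_in[of B "{Hform A, Hform C, Vform B}" v] by auto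
next
  fix g assume "g \<in> {Hform A, Hform C, Vform B}"
  then show "subst (sz B) g = 0"
    by (auto intro!: sy_kill simp: sz_def sy_def Hform_def subst_simps split: option.splits)
qed

lemma z_char: "A \<noteq> C \<Longrightarrow> p \<in> ideal_gen {Hform A, Hform C, Vform B} \<longleftrightarrow> subst (sz B) p = 0"
  using z_conds by (rule kernel_char)

lemma z_prime: "A \<noteq> C \<Longrightarrow> p * q \<in> ideal_gen {Hform A, Hform C, Vform B} \<Longrightarrow>
    p \<in> ideal_gen {Hform A, Hform C, Vform B} \<or> q \<in> ideal_gen {Hform A, Hform C, Vform B}"
  using z_conds by (rule kernel_prime)

lemma z_V_notin: "A \<noteq> C \<Longrightarrow> B' \<noteq> B \<Longrightarrow> Vform B' \<notin> ideal_gen {Hform A, Hform C, Vform B}"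
  using z_char[of A C "Vform B'" B] sy_nonkill[of B' B "sz B"]
  by (auto simp: sz_def sy_def)

lemma H_irrel: "Hform A \<in> irrel"
  unfolding irrel_def Hform_def by (intro ig_diff ig_multL; rule ideal_gen_base; simp)
lemma V_irrel: "Vform B \<in> irrel"
  unfolding irrel_def Vform_def by (intro ig_diff ig_multL; rule ideal_gen_base; simp)

lemma one_notin_irrel: "1 \<notin> irrel"
proof -
  have c1: "\<And>v. pvar v - (\<lambda>_. 0) v \<in> ideal_gen {pvar X0, pvar X1, pvar Y0, pvar Y1}"
    by (case_tac v) (auto intro: ideal_gen_base)
  have c2: "\<And>g. g \<in> {pvar X0, pvar X1, pvar Y0, pvar Y1} \<Longrightarrow> subst (\<lambda>_. 0) g = 0" by auto
  have "1 \<in> irrel \<longleftrightarrow> subst (\<lambda>_. 0) 1 = 0" unfolding irrel_def using c1 c2 by (rule kernel_char)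
  then show ?thesis by simp
qed

lemma I_pt_irrel: "I_pt P \<subseteq> irrel"
  unfolding I_pt_eq
  using H_irrel V_irrel by (intro ideal_gen_least) (auto simp: irrel_def ig)


definition primeset :: "R set \<Rightarrow> bool" where
  "primeset P \<longleftrightarrow> 1 \<notin> P \<and> (\<forall>p q. p * q \<in> P \<longrightarrow> p \<in> P \<or> q \<in> P)"

lemma primesetD: "primeset P \<Longrightarrow> p * q \<in> P \<Longrightarrow> p \<in> P \<or> q \<in> P"
  unfolding primeset_def by blast
lemma primeset_one: "primeset P \<Longrightarrow> 1 \<notin> P"
  unfolding primeset_def by blast

lemma prod_notin:
  assumes "primeset P" "\<And>k. k \<in> F \<Longrightarrow> f k \<notin> P"
  shows "prod f F \<notin> P"
  using assms(2)
proof (induction F rule: infinite_finite_induct)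
  case (infinite A) then show ?case using primeset_one[OF assms(1)] by simp
next
  case empty then show ?case using primeset_one[OF assms(1)] by simp
next
  case (insert x F)
  then show ?case using primesetD[OF assms(1), of "f x" "prod f F"] by auto
qed

lemma one_notin_char:
  assumes "\<And>p. p \<in> I \<longleftrightarrow> subst \<sigma> p = 0"
  shows "1 \<notin> I"
  using assms[of 1] by simp

lemma primeset_pt: "primeset (I_pt P)"
  unfolding primeset_def using pt_prime I_pt_irrel one_notin_irrel by blast

lemma primeset_H: "primeset (ideal_gen {Hform A})"
  unfolding primeset_def using H_prime one_notin_char[OF H_char] by blast

lemma primeset_V: "primeset (ideal_gen {Vform B})"
  unfolding primeset_def using V_prime one_notin_char[OF V_char] by blast

lemma primeset_z: "A \<noteq> C \<Longrightarrow> primeset (ideal_gen {Hform A, Hform C, Vform B})"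
  unfolding primeset_def using z_prime one_notin_char[OF z_char] by blast

lemma ideal_gen_ideal: "is_ideal J \<Longrightarrow> ideal_gen J = J"
  using ideal_gen_least[of J J] ideal_gen_base[of _ J] by auto

lemma ideal_gen_triple: "ideal_gen {x, y, z} = {a * x + b * y + c * z | a b c. True}"
proof -
  have "ideal_gen {x, y, z} = {k + c * x | k c. k \<in> ideal_gen {y, z}}"
    by (rule ideal_gen_insert)
  also have "\<dots> = {a * x + b * y + c * z | a b c. True}"
    unfolding ideal_gen_pair
  proof (intro set_eqI iffI)
    fix w assume "w \<in> {k + c * x | k c. k \<in> {a * y + b * z | a b. True}}"
    then obtain a b c where "w = a * y + b * z + c * x" by blast
    then have "w = c * x + a * y + b * z" by (simp add: algebra_simps)
    then show "w \<in> {a * x + b * y + c * z | a b c. True}" by blast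
  next
    fix w assume "w \<in> {a * x + b * y + c * z | a b c. True}"
    then obtain a b c where "w = a * x + b * y + c * z" by blast
    then have "w = (b * y + c * z) + a * x" by (simp add: algebra_simps)
    then show "w \<in> {k + c * x | k c. k \<in> {a * y + b * z | a b. True}}" by blast
  qed
  finally show ?thesis .
qed

lemma prod_factor: "finite F \<Longrightarrow> k \<in> F \<Longrightarrow> prod f F = f k * prod f (F - {k})"
  by (rule prod.remove)

lemma prod_in_ideal: "finite F \<Longrightarrow> k \<in> F \<Longrightarrow> f k \<in> ideal_gen G \<Longrightarrow> prod f F \<in> ideal_gen G"
  by (simp add: prod_factor ig_multR)

lemma row_lemma:
  fixes N :: nat
  assumes pr: "\<And>k. k < N \<Longrightarrow> primeset (ideal_gen (insert (f k) K))"
    and ni: "\<And>k k'. k < N \<Longrightarrow> k' < N \<Longrightarrow> k' \<noteq> k \<Longrightarrow> f k' \<notin> ideal_gen (insert (f k) K)"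
  shows "n \<le> N \<Longrightarrow> (\<And>k. k < n \<Longrightarrow> p \<in> ideal_gen (insert (f k) K)) \<Longrightarrow> p \<in> ideal_gen (insert (\<Prod>k<n. f k) K)"
proof (induction n)
  case 0
  have "p = 0 + p * (\<Prod>k<0. f k)" by simp
  moreover have "0 \<in> ideal_gen K" by (rule ig_0)
  ultimately show ?case unfolding ideal_gen_insert by blast
next
  case (Suc n)
  then have "p \<in> ideal_gen (insert (\<Prod>k<n. f k) K)" by simp
  then obtain \<kappa> c where pk: "p = \<kappa> + c * (\<Prod>k<n. f k)" "\<kappa> \<in> ideal_gen K"
    unfolding ideal_gen_insert by blast
  let ?I = "ideal_gen (insert (f n) K)"
  have pI: "p \<in> ?I" using Suc by simp
  have kI: "\<kappa> \<in> ?I" using pk(2) ideal_gen_mono[of K "insert (f n) K"] by blast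
  have "c * (\<Prod>k<n. f k) \<in> ?I" using ig_diff[OF pI kI] pk(1) by simp
  moreover have "(\<Prod>k<n. f k) \<notin> ?I"
    by (rule prod_notin[OF pr]) (use Suc.prems ni in auto)
  moreover have "primeset ?I" using pr[of n] Suc.prems by simp
  ultimately have "c \<in> ?I" using primesetD[of ?I c "\<Prod>k<n. f k"] by blast
  then obtain \<kappa>' d where cd: "c = \<kappa>' + d * f n" "\<kappa>' \<in> ideal_gen K"
    unfolding ideal_gen_insert by blast
  have "p = (\<kappa> + (\<Prod>k<n. f k) * \<kappa>') + d * (\<Prod>k<Suc n. f k)"
    unfolding pk(1) cd(1) by (simp add: algebra_simps)
  moreover have "\<kappa> + (\<Prod>k<n. f k) * \<kappa>' \<in> ideal_gen K"
    using pk(2) cd(2) by (simp add: ig_add ig_multL)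
  ultimately show ?case unfolding ideal_gen_insert by blast
qed

lemma lines_factor_sub:
  assumes sat: "\<And>x q. x \<in> F \<Longrightarrow> \<phi> x * q \<in> K \<Longrightarrow> q \<in> K"
    and pr: "\<And>x. x \<in> F \<Longrightarrow> primeset (ideal_gen {\<phi> x})"
    and ind: "\<And>x y. x \<in> F \<Longrightarrow> y \<in> F \<Longrightarrow> x \<noteq> y \<Longrightarrow> \<phi> y \<notin> ideal_gen {\<phi> x}"
  shows "finite G \<Longrightarrow> G \<subseteq> F \<Longrightarrow> p \<in> K \<Longrightarrow> (\<And>x. x \<in> G \<Longrightarrow> p \<in> ideal_gen {\<phi> x}) \<Longrightarrow> \<exists>q\<in>K. p = prod \<phi> G * q"
proof (induction G arbitrary: p rule: finite_induct)
  case empty then show ?case by auto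
next
  case (insert x G)
  have "\<exists>q\<in>K. p = prod \<phi> G * q"
    by (rule insert.IH) (use insert.prems in auto)
  then obtain q where q: "q \<in> K" "p = prod \<phi> G * q" by blast
  have xF: "x \<in> F" using insert.prems by auto
  have "prod \<phi> G * q \<in> ideal_gen {\<phi> x}" using insert.prems q by auto
  moreover have "prod \<phi> G \<notin> ideal_gen {\<phi> x}"
  proof (rule prod_notin[OF pr[OF xF]])
    fix k assume "k \<in> G"
    then have "k \<in> F" "k \<noteq> x" using insert.hyps(2) insert.prems(1) by auto
    then show "\<phi> k \<notin> ideal_gen {\<phi> x}" using ind[OF xF] by auto
  qed
  ultimately have "q \<in> ideal_gen {\<phi> x}" using primesetD[OF pr[OF xF], of "prod \<phi> G" q] by blast
  then obtain c where c: "q = c * \<phi> x" unfolding ideal_gen_single by blast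
  have "c \<in> K" using sat[OF xF, of c] q c by (simp add: mult.commute)
  moreover have "p = prod \<phi> (insert x G) * c" using q c insert.hyps by (simp add: mult_ac)
  ultimately show ?case by blast
qed

lemma lines_factor:
  assumes "finite F"
    and pr: "\<And>x. x \<in> F \<Longrightarrow> primeset (ideal_gen {\<phi> x})"
    and ind: "\<And>x y. x \<in> F \<Longrightarrow> y \<in> F \<Longrightarrow> x \<noteq> y \<Longrightarrow> \<phi> y \<notin> ideal_gen {\<phi> x}"
    and sat: "\<And>x q. x \<in> F \<Longrightarrow> \<phi> x * q \<in> K \<Longrightarrow> q \<in> K"
    and K: "is_ideal K"
  shows "{p \<in> K. \<forall>x\<in>F. p \<in> ideal_gen {\<phi> x}} = (\<lambda>q. prod \<phi> F * q) ` K"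
proof
  show "{p \<in> K. \<forall>x\<in>F. p \<in> ideal_gen {\<phi> x}} \<subseteq> (\<lambda>q. prod \<phi> F * q) ` K"
  proof
    fix p assume "p \<in> {p \<in> K. \<forall>x\<in>F. p \<in> ideal_gen {\<phi> x}}"
    then have pK: "p \<in> K" and pF: "\<And>x. x \<in> F \<Longrightarrow> p \<in> ideal_gen {\<phi> x}" by auto
    have "\<exists>q\<in>K. p = prod \<phi> F * q"
      using sat pr ind assms(1) subset_refl[of F] pK pF by (rule lines_factor_sub)
    then show "p \<in> (\<lambda>q. prod \<phi> F * q) ` K" by blast
  qed
next
  show "(\<lambda>q. prod \<phi> F * q) ` K \<subseteq> {p \<in> K. \<forall>x\<in>F. p \<in> ideal_gen {\<phi> x}}"
  proof clarify
    fix q assume "q \<in> K"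
    then show "prod \<phi> F * q \<in> K \<and> (\<forall>x\<in>F. prod \<phi> F * q \<in> ideal_gen {\<phi> x})"
      using K assms(1) by (auto simp: ideal_multL ideal_gen_base intro!: ig_multR prod_in_ideal)
  qed
qed

lemma is_ideal_image_mult: "is_ideal K \<Longrightarrow> is_ideal ((\<lambda>q. c * q) ` K)"
  unfolding is_ideal_def
proof (intro conjI ballI allI)
  assume K: "0 \<in> K \<and> (\<forall>a\<in>K. \<forall>b\<in>K. a + b \<in> K) \<and> (\<forall>a\<in>K. \<forall>r. r * a \<in> K)"
  show "0 \<in> (*) c ` K" using K by (intro image_eqI[of _ _ 0]) auto
  fix a b assume "a \<in> (*) c ` K" "b \<in> (*) c ` K"
  then obtain a' b' where "a = c * a'" "b = c * b'" "a' \<in> K" "b' \<in> K" by blast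
  then show "a + b \<in> (*) c ` K" using K by (intro image_eqI[of _ _ "a' + b'"]) (auto simp: distrib_left)
next
  assume K: "0 \<in> K \<and> (\<forall>a\<in>K. \<forall>b\<in>K. a + b \<in> K) \<and> (\<forall>a\<in>K. \<forall>r. r * a \<in> K)"
  fix a r assume "a \<in> (*) c ` K"
  then obtain a' where "a = c * a'" "a' \<in> K" by blast
  then show "r * a \<in> (*) c ` K" using K by (intro image_eqI[of _ _ "r * a'"]) (auto simp: mult.left_commute)
qed

lemma is_ideal_I_X: "is_ideal (I_X Y)"
  unfolding is_ideal_def I_X_def I_pt_def by (auto simp: ig_0 ig_add ig_multL)


lemma insert_pair_comm: "insert z {x, y} = {x, y, z}" by auto

lemma row_pt:
  assumes "distinct bs" "n \<le> length bs" "\<And>k. k < n \<Longrightarrow> p \<in> I_pt (A, bs!k)"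
  shows "p \<in> ideal_gen {Hform A, \<Prod>k<n. Vform (bs!k)}"
proof -
  have "p \<in> ideal_gen (insert (\<Prod>k<n. Vform (bs!k)) {Hform A})"
  proof (rule row_lemma[of n])
    fix k assume "k < n"
    then show "primeset (ideal_gen (insert (Vform (bs!k)) {Hform A}))"
      using primeset_pt[of "(A, bs!k)"] by (simp add: I_pt_def insert_commute)
  next
    fix k k' assume "k < n" "k' < n" "k' \<noteq> k"
    then have "bs!k' \<noteq> bs!k" using assms by (simp add: nth_eq_iff_index_eq)
    then show "Vform (bs!k') \<notin> ideal_gen (insert (Vform (bs!k)) {Hform A})"
      using pt_V_notin[of "bs!k'" "(A, bs!k)"] by (simp add: I_pt_def insert_commute)
  next
    fix k assume "k < n"
    then show "p \<in> ideal_gen (insert (Vform (bs!k)) {Hform A})"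
      using assms(3)[of k] by (simp add: I_pt_def insert_commute)
  qed simp
  then show ?thesis by (simp add: insert_commute)
qed

lemma Vprod_in_pt:
  assumes "k < n"
  shows "(\<Prod>k<n. Vform (bs!k)) \<in> I_pt (A, bs!k)"
  unfolding I_pt_def
  by (rule prod_in_ideal[of _ k]) (use assms in \<open>auto intro: ideal_gen_base\<close>)

lemma Hprod_in_pt:
  assumes "k < n"
  shows "(\<Prod>k<n. Hform (as!k)) \<in> I_pt (as!k, B)"
  unfolding I_pt_def
  by (rule prod_in_ideal[of _ k]) (use assms in \<open>auto intro: ideal_gen_base\<close>)

lemma row_N2:
  assumes "distinct bs" "n \<le> length bs" "A \<noteq> C"
    and "Hform A * w \<in> ideal_gen {Hform C, \<Prod>k<n. Vform (bs!k)}"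
  shows "w \<in> ideal_gen {Hform C, \<Prod>k<n. Vform (bs!k)}"
proof (rule row_pt[OF assms(1,2)])
  fix k assume k: "k < n"
  have "ideal_gen {Hform C, \<Prod>k<n. Vform (bs!k)} \<subseteq> I_pt (C, bs!k)"
    unfolding I_pt_def[of "(C, bs!k)"]
    by (rule ideal_gen_least[OF ig]) (use Vprod_in_pt[OF k, of bs C] in \<open>auto simp: I_pt_def intro: ideal_gen_base\<close>)
  then have "Hform A * w \<in> I_pt (C, bs!k)" using assms(4) by blast
  moreover have "Hform A \<notin> I_pt (C, bs!k)" using pt_H_notin[of A "(C, bs!k)"] assms(3) by simp
  ultimately show "w \<in> I_pt (C, bs!k)" using primesetD[OF primeset_pt] by blast
qed

lemma row_N1:
  assumes "distinct bs" "n \<le> length bs" "A \<noteq> C" "D \<notin> set bs"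
    and "Vform D * g \<in> ideal_gen {Hform A, Hform C, \<Prod>k<n. Vform (bs!k)}"
  shows "g \<in> ideal_gen {Hform A, Hform C, \<Prod>k<n. Vform (bs!k)}"
proof -
  have "g \<in> ideal_gen (insert (\<Prod>k<n. Vform (bs!k)) {Hform A, Hform C})"
  proof (rule row_lemma[of n])
    fix k assume "k < n"
    then show "primeset (ideal_gen (insert (Vform (bs!k)) {Hform A, Hform C}))"
      using primeset_z[OF assms(3), of "bs!k"] by (simp add: insert_pair_comm)
  next
    fix k k' assume "k < n" "k' < n" "k' \<noteq> k"
    then have "bs!k' \<noteq> bs!k" using assms by (simp add: nth_eq_iff_index_eq)
    then show "Vform (bs!k') \<notin> ideal_gen (insert (Vform (bs!k)) {Hform A, Hform C})"
      using z_V_notin[OF assms(3), of "bs!k'" "bs!k"] by (simp add: insert_pair_comm)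
  next
    fix k assume k: "k < n"
    let ?Z = "ideal_gen {Hform A, Hform C, Vform (bs!k)}"
    have "ideal_gen {Hform A, Hform C, \<Prod>k<n. Vform (bs!k)} \<subseteq> ?Z"
    proof (rule ideal_gen_least[OF ig])
      have "(\<Prod>k<n. Vform (bs!k)) \<in> ?Z"
        by (rule prod_in_ideal[of _ k]) (use k in \<open>auto intro: ideal_gen_base\<close>)
      then show "{Hform A, Hform C, \<Prod>k<n. Vform (bs!k)} \<subseteq> ?Z" by (auto intro: ideal_gen_base)
    qed
    then have "Vform D * g \<in> ?Z" using assms(5) by blast
    moreover have "Vform D \<notin> ?Z"
    proof -
      have "bs!k \<in> set bs" using k assms(2) by simp
      then have "D \<noteq> bs!k" using assms(4) by auto
      then show ?thesis using z_V_notin[OF assms(3), of D "bs!k"] by auto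
    qed
    ultimately have "g \<in> ?Z" using primesetD[OF primeset_z[OF assms(3)]] by blast
    then show "g \<in> ideal_gen (insert (Vform (bs!k)) {Hform A, Hform C})" by (simp add: insert_pair_comm)
  qed simp
  then show ?thesis by (simp add: insert_pair_comm)
qed


section \<open>Staircase ideals\<close>

definition Gf :: "p1 list \<Rightarrow> p1 list \<Rightarrow> nat \<times> nat \<Rightarrow> R" where
  "Gf as bs t = (\<Prod>k<fst t. Hform (as!k)) * (\<Prod>k<snd t. Vform (bs!k))"

definition Yset :: "p1 list \<Rightarrow> p1 list \<Rightarrow> (nat \<times> nat) set \<Rightarrow> (p1 \<times> p1) set" where
  "Yset as bs T = {(as!a, bs!b) | a b. a < length as \<and> b < length bs \<and> (\<forall>t\<in>T. a < fst t \<or> b < snd t)}"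

definition stair_ok :: "p1 list \<Rightarrow> p1 list \<Rightarrow> (nat \<times> nat) set \<Rightarrow> bool" where
  "stair_ok as bs T \<longleftrightarrow> (\<forall>t\<in>T. fst t \<le> length as \<and> snd t \<le> length bs) \<and> (\<exists>i. (i, 0) \<in> T) \<and> (\<exists>j. (0, j) \<in> T)"

lemma Gf_in_pt:
  assumes "a < fst t \<or> b < snd t"
  shows "Gf as bs t \<in> I_pt (as!a, bs!b)"
  using assms
proof
  assume "a < fst t"
  then have "(\<Prod>k<fst t. Hform (as!k)) \<in> I_pt (as!a, bs!b)" by (rule Hprod_in_pt)
  then show ?thesis unfolding Gf_def I_pt_def by (rule ig_multR)
next
  assume "b < snd t"
  then have "(\<Prod>k<snd t. Vform (bs!k)) \<in> I_pt (as!a, bs!b)" by (rule Vprod_in_pt)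
  then show ?thesis unfolding Gf_def I_pt_def by (rule ig_multL)
qed

lemma stair_sup: "ideal_gen (Gf as bs ` T) \<subseteq> I_X (Yset as bs T)"
proof (rule ideal_gen_least[OF is_ideal_I_X])
  show "Gf as bs ` T \<subseteq> I_X (Yset as bs T)"
    unfolding I_X_def Yset_def by (auto intro!: Gf_in_pt)
qed

lemma Gf_shift: "Gf (A # as) bs (Suc i, j) = Hform A * Gf as bs (i, j)"
  unfolding Gf_def fst_conv snd_conv prod.lessThan_Suc_shift nth_Cons_0 nth_Cons_Suc by (rule mult.assoc)

lemma Gf_0_0[simp]: "Gf as bs (0, 0) = 1"
  by (simp add: Gf_def)

lemma Gf_split: "j0 \<le> j \<Longrightarrow> Gf as bs (0, j) = Gf as bs (0, j0) * (\<Prod>k\<in>{j0..<j}. Vform (bs!k))"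
proof -
  assume "j0 \<le> j"
  then have "{..<j} = {..<j0} \<union> {j0..<j}" by auto
  then show ?thesis unfolding Gf_def
    by (simp add: prod.union_disjoint[symmetric] ivl_disj_int(2))
qed

text \<open>Step data for an induction on the row list.\<close>

definition j0_of :: "(nat \<times> nat) set \<Rightarrow> nat" where
  "j0_of T = (LEAST j. (0, j) \<in> T)"

definition Tsh :: "(nat \<times> nat) set \<Rightarrow> (nat \<times> nat) set" where
  "Tsh T = {(i, j) | i j. (Suc i, j) \<in> T} \<union> {(0, j0_of T)}"

lemma j0_in: "(0, j) \<in> T \<Longrightarrow> (0, j0_of T) \<in> T"
  unfolding j0_of_def by (rule LeastI)

lemma j0_le: "(0, j) \<in> T \<Longrightarrow> j0_of T \<le> j"
  unfolding j0_of_def by (rule Least_le)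

lemma stair_step:
  assumes "stair_ok (A # as) bs T" "j0_of T \<noteq> 0"
  shows "stair_ok as bs (Tsh T)"
proof -
  obtain j where j: "(0, j) \<in> T" using assms(1) by (auto simp: stair_ok_def)
  obtain i where i: "(i, 0) \<in> T" using assms(1) by (auto simp: stair_ok_def)
  have "i \<noteq> 0" using j0_le[of 0 T] i assms(2) by (cases i) auto
  then obtain i' where "i = Suc i'" by (cases i) auto
  then have "(i', 0) \<in> Tsh T" using i by (auto simp: Tsh_def)
  moreover have "(0, j0_of T) \<in> Tsh T" by (simp add: Tsh_def)
  moreover have "\<forall>t\<in>Tsh T. fst t \<le> length as \<and> snd t \<le> length bs"
    using assms(1) j0_in[OF j] by (fastforce simp: stair_ok_def Tsh_def)
  ultimately show ?thesis unfolding stair_ok_def by blast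
qed

lemma Yset_sub:
  assumes "stair_ok (A # as) bs T"
  shows "P \<in> Yset as bs (Tsh T) \<Longrightarrow> P \<in> Yset (A # as) bs T \<and> fst P \<in> set as"
proof -
  assume "P \<in> Yset as bs (Tsh T)"
  then obtain a b where P: "P = (as!a, bs!b)" "a < length as" "b < length bs"
    "\<And>t. t \<in> Tsh T \<Longrightarrow> a < fst t \<or> b < snd t"
    unfolding Yset_def by blast
  have b0: "b < j0_of T" using P(4)[of "(0, j0_of T)"] by (simp add: Tsh_def)
  have "\<forall>t\<in>T. Suc a < fst t \<or> b < snd t"
  proof
    fix t assume t: "t \<in> T"
    obtain i j where ij: "t = (i, j)" by (cases t)
    show "Suc a < fst t \<or> b < snd t"
    proof (cases i)
      case 0
      then have "j0_of T \<le> j" using j0_le t ij by blast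
      then show ?thesis using b0 ij by simp
    next
      case (Suc i')
      then have "(i', j) \<in> Tsh T" using t ij by (auto simp: Tsh_def)
      then show ?thesis using P(4) ij Suc by fastforce
    qed
  qed
  then have "P \<in> Yset (A # as) bs T" unfolding Yset_def using P by force
  then show ?thesis using P by simp
qed

lemma Yset_b_lt:
  assumes "(0, j0) \<in> T"
  shows "P \<in> Yset as bs T \<Longrightarrow> \<exists>a b. P = (as!a, bs!b) \<and> b < j0"
  using assms unfolding Yset_def by fastforce

lemma Vp_in_IX:
  assumes "(0, j0) \<in> T"
  shows "Gf as bs (0, j0) \<in> I_X (Yset as bs T)"
  unfolding I_X_def
proof clarify
  fix a b assume "(a, b) \<in> Yset as bs T"
  then obtain a' b' where "(a, b) = (as!a', bs!b')" "b' < j0" using Yset_b_lt[OF assms] by blast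
  then show "Gf as bs (0, j0) \<in> I_pt (a, b)" using Gf_in_pt[where a=a' and b=b' and t="(0, j0)" and as=as and bs=bs] by simp
qed

lemma row0_in:
  assumes "stair_ok (A # as) bs T" "b < j0_of T"
  shows "(A, bs!b) \<in> Yset (A # as) bs T"
proof -
  obtain j where j: "(0, j) \<in> T" using assms(1) by (auto simp: stair_ok_def)
  have "j0_of T \<le> length bs" using assms(1) j0_in[OF j] by (auto simp: stair_ok_def)
  moreover have "\<forall>t\<in>T. 0 < fst t \<or> b < snd t"
  proof
    fix t assume t: "t \<in> T"
    show "0 < fst t \<or> b < snd t"
    proof (cases "fst t = 0")
      case True
      then have "(0, snd t) \<in> T" using t by (metis prod.collapse)
      then show ?thesis using j0_le assms(2) by fastforce
    qed simp
  qed
  ultimately show ?thesis unfolding Yset_def using assms(2)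
    by (intro CollectI exI[of _ 0] exI[of _ b]) simp
qed

lemma H_Tsh_in:
  assumes "t \<in> Tsh T" "\<exists>j. (0, j) \<in> T"
  shows "Hform A * Gf as bs t \<in> ideal_gen (Gf (A # as) bs ` T)"
proof -
  obtain i j where t: "t = (i, j)" by (cases t)
  show ?thesis
  proof (cases "(Suc i, j) \<in> T")
    case True
    then show ?thesis unfolding t Gf_shift[symmetric] by (intro ideal_gen_base) simp
  next
    case False
    then have "t = (0, j0_of T)" using assms(1) t by (auto simp: Tsh_def)
    moreover have "Gf as bs (0, j0_of T) = Gf (A # as) bs (0, j0_of T)" by (simp add: Gf_def)
    moreover have "(0, j0_of T) \<in> T" using assms(2) j0_in by blast
    moreover have "Gf (A # as) bs (0, j0_of T) \<in> ideal_gen (Gf (A # as) bs ` T)"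
      using \<open>(0, j0_of T) \<in> T\<close> by (intro ideal_gen_base) simp
    ultimately show ?thesis using ig_multL by simp
  qed
qed

lemma H_Tsh_ideal:
  assumes "\<exists>j. (0, j) \<in> T"
  shows "(\<lambda>g. Hform A * g) ` ideal_gen (Gf as bs ` Tsh T) \<subseteq> ideal_gen (Gf (A # as) bs ` T)"
proof -
  have "ideal_gen ((\<lambda>g. Hform A * g) ` (Gf as bs ` Tsh T)) \<subseteq> ideal_gen (Gf (A # as) bs ` T)"
    by (rule ideal_gen_least[OF ig]) (use H_Tsh_in[OF _ assms] in auto)
  then show ?thesis by (simp add: ideal_gen_image_mult)
qed

lemma stair_sub:
  assumes "distinct as" "distinct bs" "stair_ok as bs T"
  shows "I_X (Yset as bs T) \<subseteq> ideal_gen (Gf as bs ` T)"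
  using assms
proof (induction as arbitrary: T)
  case Nil
  then obtain i where "(i, 0) \<in> T" by (auto simp: stair_ok_def)
  then have "(0, 0) \<in> T" using Nil by (auto simp: stair_ok_def)
  then have "1 \<in> ideal_gen (Gf [] bs ` T)" by (metis Gf_0_0 ideal_gen_base image_eqI)
  then show ?case using ideal_gen_one by auto
next
  case (Cons A as)
  obtain j where j: "(0, j) \<in> T" using Cons.prems by (auto simp: stair_ok_def)
  define j0 where "j0 = j0_of T"
  have j0T: "(0, j0) \<in> T" unfolding j0_def using j0_in[OF j] .
  show ?case
  proof (cases "j0 = 0")
    case True
    then have "1 \<in> ideal_gen (Gf (A # as) bs ` T)" using j0T by (metis Gf_0_0 ideal_gen_base image_eqI)
    then show ?thesis using ideal_gen_one by auto
  next
    case False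
    have st': "stair_ok as bs (Tsh T)" using stair_step[OF Cons.prems(3)] False j0_def by simp
    have j0len: "j0 \<le> length bs" using Cons.prems(3) j0T by (auto simp: stair_ok_def)
    show ?thesis
    proof
      fix p assume p: "p \<in> I_X (Yset (A # as) bs T)"
      have "p \<in> ideal_gen {Hform A, \<Prod>k<j0. Vform (bs!k)}"
      proof (rule row_pt[OF Cons.prems(2) j0len])
        fix k assume "k < j0"
        then have "(A, bs!k) \<in> Yset (A # as) bs T" using row0_in[OF Cons.prems(3)] j0_def by simp
        then show "p \<in> I_pt (A, bs!k)" using p by (simp add: I_X_def)
      qed
      then obtain q c where pqc: "p = q * Hform A + c * (\<Prod>k<j0. Vform (bs!k))"
        unfolding ideal_gen_pair by blast
      have Vp: "(\<Prod>k<j0. Vform (bs!k)) = Gf (A # as) bs (0, j0)" by (simp add: Gf_def)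
      have VpX: "(\<Prod>k<j0. Vform (bs!k)) \<in> I_X (Yset (A # as) bs T)"
        unfolding Vp by (rule Vp_in_IX[OF j0T])
      have "Hform A * q \<in> I_X (Yset (A # as) bs T)"
      proof -
        have "Hform A * q = p - c * (\<Prod>k<j0. Vform (bs!k))" using pqc by (simp add: mult.commute)
        then show ?thesis using p VpX is_ideal_I_X by (simp add: ideal_diff ideal_multL)
      qed
      have "q \<in> I_X (Yset as bs (Tsh T))"
        unfolding I_X_def mem_Collect_eq
      proof (rule ballI)
        fix P assume P: "P \<in> Yset as bs (Tsh T)"
        then have "P \<in> Yset (A # as) bs T" "fst P \<in> set as" using Yset_sub[OF Cons.prems(3)] by auto
        then have "Hform A * q \<in> I_pt P" using \<open>Hform A * q \<in> I_X _\<close> by (simp add: I_X_def)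
        moreover have "Hform A \<notin> I_pt P"
          using pt_H_notin[of A P] \<open>fst P \<in> set as\<close> Cons.prems(1) by auto
        ultimately show "q \<in> I_pt P" using primesetD[OF primeset_pt] by blast
      qed
      then have "q \<in> ideal_gen (Gf as bs ` Tsh T)"
        using Cons.IH[OF _ Cons.prems(2) st'] Cons.prems(1) by auto
      then have "Hform A * q \<in> ideal_gen (Gf (A # as) bs ` T)"
        using H_Tsh_ideal[of T A as bs] j by blast
      moreover have "c * (\<Prod>k<j0. Vform (bs!k)) \<in> ideal_gen (Gf (A # as) bs ` T)"
        unfolding Vp using j0T by (intro ig_multL ideal_gen_base) simp
      ultimately show "p \<in> ideal_gen (Gf (A # as) bs ` T)"
        unfolding pqc by (simp add: mult.commute ig_add)
    qed
  qed
qed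

lemma staircase:
  assumes "distinct as" "distinct bs" "stair_ok as bs T"
  shows "I_X (Yset as bs T) = ideal_gen (Gf as bs ` T)"
  using stair_sub[OF assms] stair_sup by blast


lemma decomp:
  assumes "stair_ok (A # as) bs T"
  defines "Vp \<equiv> \<Prod>k<j0_of T. Vform (bs!k)"
  shows "ideal_gen (Gf (A # as) bs ` T) \<subseteq> {Hform A * j' + r * Vp | j' r. j' \<in> ideal_gen (Gf as bs ` Tsh T)}"
proof (rule ideal_gen_least)
  let ?J' = "ideal_gen (Gf as bs ` Tsh T)"
  show "is_ideal {Hform A * j' + r * Vp | j' r. j' \<in> ?J'}" unfolding is_ideal_def
  proof (intro conjI ballI allI)
    have "0 = Hform A * 0 + 0 * Vp" by simp
    then show "0 \<in> {Hform A * j' + r * Vp | j' r. j' \<in> ?J'}" using ig_0 by blast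
  next
    fix a b assume "a \<in> {Hform A * j' + r * Vp | j' r. j' \<in> ?J'}" "b \<in> {Hform A * j' + r * Vp | j' r. j' \<in> ?J'}"
    then obtain j1 r1 j2 r2 where "a = Hform A * j1 + r1 * Vp" "j1 \<in> ?J'" "b = Hform A * j2 + r2 * Vp" "j2 \<in> ?J'" by blast
    then have "a + b = Hform A * (j1 + j2) + (r1 + r2) * Vp" "j1 + j2 \<in> ?J'" by (simp add: algebra_simps, simp add: ig_add)
    then show "a + b \<in> {Hform A * j' + r * Vp | j' r. j' \<in> ?J'}" by blast
  next
    fix a s assume "a \<in> {Hform A * j' + r * Vp | j' r. j' \<in> ?J'}"
    then obtain j1 r1 where "a = Hform A * j1 + r1 * Vp" "j1 \<in> ?J'" by blast
    then have "s * a = Hform A * (s * j1) + (s * r1) * Vp" "s * j1 \<in> ?J'" by (simp add: algebra_simps, simp add: ig_multL)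
    then show "s * a \<in> {Hform A * j' + r * Vp | j' r. j' \<in> ?J'}" by blast
  qed
next
  let ?J' = "ideal_gen (Gf as bs ` Tsh T)"
  show "Gf (A # as) bs ` T \<subseteq> {Hform A * j' + r * Vp | j' r. j' \<in> ?J'}"
  proof clarify
    fix i j assume t: "(i, j) \<in> T"
    show "\<exists>j' r. Gf (A # as) bs (i, j) = Hform A * j' + r * Vp \<and> j' \<in> ?J'"
    proof (cases i)
      case 0
      then have "j0_of T \<le> j" using j0_le t by blast
      then have "Gf (A # as) bs (i, j) = Hform A * 0 + (\<Prod>k\<in>{j0_of T..<j}. Vform (bs!k)) * Vp"
        using Gf_split[of "j0_of T" j "A # as" bs] 0 by (simp add: Vp_def Gf_def mult.commute)
      then show ?thesis using ig_0 by blast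
    next
      case (Suc i')
      then have "(i', j) \<in> Tsh T" using t by (auto simp: Tsh_def)
      then have "Gf as bs (i', j) \<in> ?J'" by (intro ideal_gen_base) simp
      moreover have "Gf (A # as) bs (i, j) = Hform A * Gf as bs (i', j) + 0 * Vp"
        using Suc by (simp add: Gf_shift)
      ultimately show ?thesis by blast
    qed
  qed
qed

lemma cond2:
  assumes "distinct as" "distinct bs" "stair_ok as bs T" "C \<notin> set as" "D \<notin> set bs"
  shows "Vform D * g \<in> {k + c * Hform C | k c. k \<in> ideal_gen (Gf as bs ` T)} \<Longrightarrow>
         g \<in> {k + c * Hform C | k c. k \<in> ideal_gen (Gf as bs ` T)}"
  using assms
proof (induction as arbitrary: T g)
  case Nil
  then obtain i where "(i, 0) \<in> T" by (auto simp: stair_ok_def)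
  then have "(0, 0) \<in> T" using Nil by (auto simp: stair_ok_def)
  then have "1 \<in> ideal_gen (Gf [] bs ` T)" by (metis Gf_0_0 ideal_gen_base image_eqI)
  then have "g * 1 \<in> ideal_gen (Gf [] bs ` T)" by (rule ig_multL)
  moreover have "g = g * 1 + 0 * Hform C" by simp
  ultimately show ?case by blast
next
  case (Cons A as)
  obtain j where j: "(0, j) \<in> T" using Cons.prems by (auto simp: stair_ok_def)
  define j0 where "j0 = j0_of T"
  have j0T: "(0, j0) \<in> T" unfolding j0_def using j0_in[OF j] .
  let ?J = "ideal_gen (Gf (A # as) bs ` T)"
  show ?case
  proof (cases "j0 = 0")
    case True
    then have "1 \<in> ?J" using j0T by (metis Gf_0_0 ideal_gen_base image_eqI)
    then have "g * 1 \<in> ?J" by (rule ig_multL)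
    moreover have "g = g * 1 + 0 * Hform C" by simp
    ultimately show ?thesis by blast
  next
    case False
    let ?J' = "ideal_gen (Gf as bs ` Tsh T)"
    define Vp where "Vp = (\<Prod>k<j0. Vform (bs!k))"
    have st': "stair_ok as bs (Tsh T)" using stair_step[OF Cons.prems(4)] False j0_def by simp
    have j0len: "j0 \<le> length bs" using Cons.prems(4) j0T by (auto simp: stair_ok_def)
    have AC: "A \<noteq> C" using Cons.prems(5) by auto
    obtain k c where kc: "Vform D * g = k + c * Hform C" "k \<in> ?J" using Cons.prems(1) by blast
    obtain j' r where jr: "k = Hform A * j' + r * Vp" "j' \<in> ?J'"
      using decomp[OF Cons.prems(4)] kc(2) unfolding Vp_def j0_def by blast
    have "Vform D * g \<in> ideal_gen {Hform A, Hform C, Vp}"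
    proof -
      have "Vform D * g = j' * Hform A + c * Hform C + r * Vp" using kc jr by (simp add: algebra_simps)
      then show ?thesis unfolding ideal_gen_triple by blast
    qed
    then have "g \<in> ideal_gen {Hform A, Hform C, Vp}"
      unfolding Vp_def using row_N1[OF Cons.prems(3) j0len AC Cons.prems(6)] by blast
    then obtain g1 g3 g2 where gg: "g = g1 * Hform A + g3 * Hform C + g2 * Vp"
      unfolding ideal_gen_triple by blast
    have "Hform A * (Vform D * g1 - j') = (c - Vform D * g3) * Hform C + (r - Vform D * g2) * Vp"
    proof -
      have "Vform D * g = Vform D * g1 * Hform A + Vform D * g3 * Hform C + Vform D * g2 * Vp"
        using gg by (simp add: algebra_simps)
      then show ?thesis using kc(1) jr(1) by (simp add: algebra_simps)
    qed
    then have "Hform A * (Vform D * g1 - j') \<in> ideal_gen {Hform C, Vp}"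
      unfolding ideal_gen_pair by blast
    then have "Vform D * g1 - j' \<in> ideal_gen {Hform C, Vp}"
      unfolding Vp_def using row_N2[OF Cons.prems(3) j0len AC] by blast
    then obtain e f where ef: "Vform D * g1 - j' = e * Hform C + f * Vp"
      unfolding ideal_gen_pair by blast
    have VpJ': "Vp \<in> ?J'"
    proof -
      have "Vp = Gf as bs (0, j0)" by (simp add: Vp_def Gf_def)
      moreover have "(0, j0) \<in> Tsh T" by (simp add: Tsh_def j0_def)
      ultimately show ?thesis by (auto intro: ideal_gen_base)
    qed
    have "Vform D * g1 = (j' + f * Vp) + e * Hform C" using ef by (simp add: algebra_simps)
    moreover have "j' + f * Vp \<in> ?J'" using jr(2) VpJ' by (simp add: ig_add ig_multL)
    ultimately have "Vform D * g1 \<in> {k + c * Hform C | k c. k \<in> ?J'}" by blast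
    then have "g1 \<in> {k + c * Hform C | k c. k \<in> ?J'}"
      using Cons.IH[OF _ _ Cons.prems(3) st'] Cons.prems(2,5,6) by auto
    then obtain k' e' where ke: "g1 = k' + e' * Hform C" "k' \<in> ?J'" by blast
    have "Hform A * k' \<in> ?J" using H_Tsh_ideal[of T A as bs] j ke(2) by blast
    moreover have "g2 * Vp \<in> ?J"
    proof -
      have "Vp = Gf (A # as) bs (0, j0)" by (simp add: Vp_def Gf_def)
      moreover have "Gf (A # as) bs (0, j0) \<in> ?J" by (rule ideal_gen_base) (use j0T in simp)
      ultimately show ?thesis using ig_multL by simp
    qed
    ultimately have "Hform A * k' + g2 * Vp \<in> ?J" by (rule ig_add)
    moreover have "g = (Hform A * k' + g2 * Vp) + (e' * Hform A + g3) * Hform C"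
      using gg ke(1) by (simp add: algebra_simps)
    ultimately show ?thesis by blast
  qed
qed

lemma infinite_p1: "infinite (UNIV :: p1 set)"
proof
  assume "finite (UNIV :: p1 set)"
  then have "finite (Some ` (UNIV :: complex set))" by (rule finite_subset[rotated]) auto
  then have "finite (UNIV :: complex set)" using finite_imageD inj_Some by blast
  then show False using infinite_UNIV_char_0 by blast
qed

lemma Yset_finite: "finite (Yset as bs T)"
proof -
  have "Yset as bs T \<subseteq> (\<lambda>(a, b). (as!a, bs!b)) ` ({..<length as} \<times> {..<length bs})"
    unfolding Yset_def by auto
  then show ?thesis by (rule finite_subset) simp
qed

lemma Yset_fst: "P \<in> Yset as bs T \<Longrightarrow> fst P \<in> set as"
  unfolding Yset_def by auto
lemma Yset_snd: "P \<in> Yset as bs T \<Longrightarrow> snd P \<in> set bs"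
  unfolding Yset_def by auto

lemma irrel_ideal: "is_ideal irrel"
  unfolding irrel_def by (rule ig)

lemma Yset_ACM:
  assumes "distinct as" "distinct bs" "stair_ok as bs T"
  shows "ACM (Yset as bs T)"
proof (cases "Yset as bs T = {}")
  case True then show ?thesis by (simp add: ACM_def)
next
  case False
  let ?Y = "Yset as bs T"
  obtain C where C: "C \<notin> set as" using ex_new_if_finite[OF infinite_p1, of "set as"] by auto
  obtain D where D: "D \<notin> set bs" using ex_new_if_finite[OF infinite_p1, of "set bs"] by auto
  obtain P0 where P0: "P0 \<in> ?Y" using False by blast
  have IXeq: "I_X ?Y = ideal_gen (Gf as bs ` T)" by (rule staircase[OF assms])
  have "regular_seq2 (I_X ?Y) (Hform C) (Vform D)"
    unfolding regular_seq2_def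
  proof (intro conjI allI impI)
    show "Hform C \<in> irrel" by (rule H_irrel)
    show "Vform D \<in> irrel" by (rule V_irrel)
  next
    fix g assume "Hform C * g \<in> I_X ?Y"
    show "g \<in> I_X ?Y" unfolding I_X_def mem_Collect_eq
    proof (rule ballI)
      fix P assume P: "P \<in> ?Y"
      then have "Hform C * g \<in> I_pt P" using \<open>Hform C * g \<in> I_X ?Y\<close> by (simp add: I_X_def)
      moreover have "Hform C \<notin> I_pt P" using pt_H_notin[of C P] Yset_fst[OF P] C by auto
      ultimately show "g \<in> I_pt P" using primesetD[OF primeset_pt] by blast
    qed
  next
    fix g
    have eq: "ideal_gen (I_X ?Y \<union> {Hform C}) = {k + c * Hform C | k c. k \<in> ideal_gen (Gf as bs ` T)}"
      unfolding IXeq using ideal_gen_insert[of "Hform C" "ideal_gen (Gf as bs ` T)"]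
      by (simp add: ideal_gen_ideal[OF ig])
    assume "Vform D * g \<in> ideal_gen (I_X ?Y \<union> {Hform C})"
    then show "g \<in> ideal_gen (I_X ?Y \<union> {Hform C})"
      unfolding eq using cond2[OF assms C D] by blast
  next
    have "I_X ?Y \<subseteq> I_pt P0" using P0 by (auto simp: I_X_def)
    then have "I_X ?Y \<subseteq> irrel" using I_pt_irrel[of P0] by blast
    then have "ideal_gen (I_X ?Y \<union> {Hform C, Vform D}) \<subseteq> irrel"
      by (intro ideal_gen_least[OF irrel_ideal]) (auto simp: H_irrel V_irrel)
    then show "1 \<notin> ideal_gen (I_X ?Y \<union> {Hform C, Vform D})" using one_notin_irrel by blast
  qed
  then show ?thesis unfolding ACM_def using Yset_finite by blast
qed


lemma sat_pt_H:
  assumes "\<And>P. P \<in> Y \<Longrightarrow> fst P \<noteq> A" "Hform A * q \<in> I_X Y"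
  shows "q \<in> I_X Y"
  unfolding I_X_def mem_Collect_eq
proof (rule ballI)
  fix P assume P: "P \<in> Y"
  then have "Hform A * q \<in> I_pt P" using assms(2) by (simp add: I_X_def)
  moreover have "Hform A \<notin> I_pt P" using pt_H_notin[of A P] assms(1)[OF P] by auto
  ultimately show "q \<in> I_pt P" using primesetD[OF primeset_pt] by blast
qed

lemma sat_pt_V:
  assumes "\<And>P. P \<in> Y \<Longrightarrow> snd P \<noteq> B" "Vform B * q \<in> I_X Y"
  shows "q \<in> I_X Y"
  unfolding I_X_def mem_Collect_eq
proof (rule ballI)
  fix P assume P: "P \<in> Y"
  then have "Vform B * q \<in> I_pt P" using assms(2) by (simp add: I_X_def)
  moreover have "Vform B \<notin> I_pt P" using pt_V_notin[of B P] assms(1)[OF P] by auto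
  ultimately show "q \<in> I_pt P" using primesetD[OF primeset_pt] by blast
qed

lemma lines_all:
  assumes "finite hl" "finite vl" "\<And>P. P \<in> Y \<Longrightarrow> fst P \<notin> hl \<and> snd P \<notin> vl"
  shows "I_W \<lparr>pts = Y, hlines = hl, vlines = vl\<rparr> = (\<lambda>g. Lambda \<lparr>pts = Y, hlines = hl, vlines = vl\<rparr> * g) ` I_X Y"
proof -
  let ?K1 = "I_X Y"
  let ?PV = "\<Prod>B\<in>vl. Vform B"
  let ?PH = "\<Prod>A\<in>hl. Hform A"
  let ?K2 = "(\<lambda>q. ?PV * q) ` ?K1"
  have K2: "{p \<in> ?K1. \<forall>B\<in>vl. p \<in> ideal_gen {Vform B}} = ?K2"
  proof (rule lines_factor[OF assms(2)])
    show "\<And>x. x \<in> vl \<Longrightarrow> primeset (ideal_gen {Vform x})" by (rule primeset_V)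
    show "\<And>x y. x \<in> vl \<Longrightarrow> y \<in> vl \<Longrightarrow> x \<noteq> y \<Longrightarrow> Vform y \<notin> ideal_gen {Vform x}" by (rule V_V_notin) auto
    show "\<And>x q. x \<in> vl \<Longrightarrow> Vform x * q \<in> ?K1 \<Longrightarrow> q \<in> ?K1"
      by (rule sat_pt_V) (use assms(3) in auto)
    show "is_ideal ?K1" by (rule is_ideal_I_X)
  qed
  have K3: "{p \<in> ?K2. \<forall>A\<in>hl. p \<in> ideal_gen {Hform A}} = (\<lambda>q. ?PH * q) ` ?K2"
  proof (rule lines_factor[OF assms(1)])
    show "\<And>x. x \<in> hl \<Longrightarrow> primeset (ideal_gen {Hform x})" by (rule primeset_H)
    show "\<And>x y. x \<in> hl \<Longrightarrow> y \<in> hl \<Longrightarrow> x \<noteq> y \<Longrightarrow> Hform y \<notin> ideal_gen {Hform x}" by (rule H_H_notin) auto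
    show "is_ideal ?K2" by (rule is_ideal_image_mult[OF is_ideal_I_X])
  next
    fix A q assume A: "A \<in> hl" and "Hform A * q \<in> ?K2"
    then obtain k where k: "Hform A * q = ?PV * k" "k \<in> ?K1" by blast
    have "?PV * k \<in> ideal_gen {Hform A}" unfolding ideal_gen_single using k(1)
      by (metis (mono_tags, lifting) mem_Collect_eq mult.commute)
    moreover have "?PV \<notin> ideal_gen {Hform A}"
      by (rule prod_notin[OF primeset_H]) (rule V_H_notin)
    ultimately have "k \<in> ideal_gen {Hform A}" using primesetD[OF primeset_H] by blast
    then obtain c where c: "k = c * Hform A" unfolding ideal_gen_single by blast
    have "c \<in> ?K1"
      by (rule sat_pt_H[of Y A]) (use assms(3) A k c in \<open>auto simp: mult.commute\<close>)
    moreover have "q = ?PV * c"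
    proof -
      have "Hform A * q = Hform A * (?PV * c)" using k(1) c by (simp add: mult_ac)
      then show ?thesis using Hform_neq0[of A] by simp
    qed
    ultimately show "q \<in> ?K2" by blast
  qed
  have "I_W \<lparr>pts = Y, hlines = hl, vlines = vl\<rparr> = {p \<in> ?K2. \<forall>A\<in>hl. p \<in> ideal_gen {Hform A}}"
    unfolding K2[symmetric] I_W_def by auto
  also have "\<dots> = (\<lambda>q. ?PH * q) ` (\<lambda>q. ?PV * q) ` ?K1" by (rule K3)
  also have "\<dots> = (\<lambda>g. Lambda \<lparr>pts = Y, hlines = hl, vlines = vl\<rparr> * g) ` I_X Y"
    unfolding image_image Lambda_def by (simp add: mult.assoc)
  finally show ?thesis .
qed


lemma prod_shift0: "(\<Prod>k<(m::nat) + d. f k) = (\<Prod>k<m. f k) * (\<Prod>k<d. (f (m + k) :: R))"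
  by (induction d) (simp_all add: mult.assoc)
lemma prod_shift: "(m::nat) \<le> i \<Longrightarrow> (\<Prod>k<i. f k) = (\<Prod>k<m. f k) * (\<Prod>k<i - m. (f (m + k) :: R))"
  using prod_shift0[where m=m and d="i - m" and f=f] by simp

lemma Gf_decomp:
  assumes "m \<le> length as" "n \<le> length bs" "m \<le> fst t" "n \<le> snd t"
  shows "Gf as bs t = Gf as bs (m, n) * Gf (drop m as) (drop n bs) (fst t - m, snd t - n)"
proof -
  have "(\<Prod>k<fst t. Hform (as!k)) = (\<Prod>k<m. Hform (as!k)) * (\<Prod>k<fst t - m. Hform (drop m as ! k))"
    using prod_shift[OF assms(3), of "\<lambda>k. Hform (as!k)"] assms(1) by simp
  moreover have "(\<Prod>k<snd t. Vform (bs!k)) = (\<Prod>k<n. Vform (bs!k)) * (\<Prod>k<snd t - n. Vform (drop n bs ! k))"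
    using prod_shift[OF assms(4), of "\<lambda>k. Vform (bs!k)"] assms(2) by simp
  ultimately show ?thesis unfolding Gf_def by (simp add: mult_ac)
qed

lemma prod_take:
  assumes "distinct xs" "m \<le> length xs"
  shows "(\<Prod>A\<in>set (take m xs). f A) = (\<Prod>k<m. (f (xs!k) :: R))"
proof -
  have "set (take m xs) = (!) xs ` {..<m}" using nth_image[OF assms(2)] by (simp add: atLeast0LessThan)
  moreover have "inj_on ((!) xs) {..<m}" using assms by (intro inj_on_nth) auto
  ultimately show ?thesis by (simp add: prod.reindex)
qed

lemma rc_le:
  assumes "finite X"
  shows "row_count X A \<le> card (snd ` X)"
  unfolding row_count_def
proof (rule card_inj_on_le)
  show "inj_on snd {P \<in> X. fst P = A}" by (rule inj_onI) (auto simp: prod_eq_iff)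
  show "snd ` {P \<in> X. fst P = A} \<subseteq> snd ` X" by auto
  show "finite (snd ` X)" using assms by simp
qed

theorem theorem4p5:
  fixes W :: ULP and as bs :: "p1 list" and S :: "R set"
  assumes "is_ULACM W"
    and "valid_labelling (pts W) as bs"
    and "S \<subseteq> std_gens W as bs"
    and "S \<noteq> {}"
  shows "\<exists>W' :: ULP. is_ULACM W' \<and> ideal_gen S = I_W W'"
proof -
  define X where "X = pts W"
  define h where "h = length as"
  define v where "v = length bs"
  define \<Lambda> where "\<Lambda> = Lambda W"
  have ulp: "is_ULP W" using assms(1) by (simp add: is_ULACM_def)
  have finX: "finite X" using ulp by (simp add: is_ULP_def X_def)
  have vl: "distinct as" "set as = fst ` X" "distinct bs" "set bs = snd ` X"
    using assms(2) by (simp_all add: valid_labelling_def X_def)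
  have vcard: "v = card (snd ` X)" using vl(3,4) distinct_card v_def by metis
  define T0 where "T0 = {(h, 0), (0, v)} \<union>
     {(i, row_count X (as!i)) | i. 1 \<le> i \<and> i < h \<and> row_count X (as!i) < row_count X (as!(i-1))}"
  have c: "Gf as bs ` {(i, row_count X (as!i)) | i. 1 \<le> i \<and> i < h \<and> row_count X (as!i) < row_count X (as!(i-1))}
      = {Gf as bs (i, row_count X (as!i)) | i. 1 \<le> i \<and> i < h \<and> row_count X (as!i) < row_count X (as!(i-1))}"
    by blast
  have gens: "gens_X X as bs = Gf as bs ` T0"
    unfolding gens_X_def T0_def image_Un image_insert image_empty c
    by (simp add: Gf_def h_def v_def)
  have T0b: "\<And>t. t \<in> T0 \<Longrightarrow> fst t \<le> h \<and> snd t \<le> v"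
    unfolding T0_def using rc_le[OF finX] vcard by auto
  have finT0: "finite T0"
  proof (rule finite_subset[of _ "{..h} \<times> {..v}"])
    show "T0 \<subseteq> {..h} \<times> {..v}"
    proof
      fix t assume "t \<in> T0"
      then show "t \<in> {..h} \<times> {..v}" using T0b[of t] by (cases t) auto
    qed
  qed simp
  define T where "T = {t \<in> T0. \<Lambda> * Gf as bs t \<in> S}"
  have S_eq: "S = (\<lambda>t. \<Lambda> * Gf as bs t) ` T"
  proof
    show "S \<subseteq> (\<lambda>t. \<Lambda> * Gf as bs t) ` T"
    proof
      fix s assume s: "s \<in> S"
      then have "s \<in> std_gens W as bs" using assms(3) by blast
      then obtain t where "t \<in> T0" "s = \<Lambda> * Gf as bs t"
        unfolding std_gens_def gens[unfolded X_def] \<Lambda>_def by blast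
      then show "s \<in> (\<lambda>t. \<Lambda> * Gf as bs t) ` T" using s unfolding T_def by blast
    qed
  qed (auto simp: T_def)
  have Tne: "T \<noteq> {}" using S_eq assms(4) by auto
  have finT: "finite T" using finT0 by (simp add: T_def)
  have Tb: "\<And>t. t \<in> T \<Longrightarrow> fst t \<le> h \<and> snd t \<le> v" using T0b by (simp add: T_def)
  define im where "im = Min (fst ` T)"
  define jm where "jm = Min (snd ` T)"
  have im_le: "\<And>t. t \<in> T \<Longrightarrow> im \<le> fst t" unfolding im_def using finT by simp
  have jm_le: "\<And>t. t \<in> T \<Longrightarrow> jm \<le> snd t" unfolding jm_def using finT by simp
  have "im \<in> fst ` T" unfolding im_def using finT Tne by (intro Min_in) auto
  then obtain ti where ti: "ti \<in> T" "fst ti = im" by (metis imageE)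
  have "jm \<in> snd ` T" unfolding jm_def using finT Tne by (intro Min_in) auto
  then obtain tj where tj: "tj \<in> T" "snd tj = jm" by (metis imageE)
  have imh: "im \<le> h" using im_le[OF ti(1)] Tb[OF ti(1)] by simp
  have jmv: "jm \<le> v" using jm_le[OF tj(1)] Tb[OF tj(1)] by simp
  define as2 where "as2 = drop im as"
  define bs2 where "bs2 = drop jm bs"
  define sh where "sh = (\<lambda>t::nat \<times> nat. (fst t - im, snd t - jm))"
  define T2 where "T2 = sh ` T"
  have d2: "distinct as2" "distinct bs2" using vl by (simp_all add: as2_def bs2_def)
  have st2: "stair_ok as2 bs2 T2"
    unfolding stair_ok_def
  proof (intro conjI)
    show "\<forall>t\<in>T2. fst t \<le> length as2 \<and> snd t \<le> length bs2"
      using Tb by (auto simp: T2_def sh_def as2_def bs2_def h_def v_def diff_le_mono)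
    have "sh tj \<in> T2" using tj by (simp add: T2_def)
    then show "\<exists>i. (i, 0) \<in> T2" using tj by (auto simp: sh_def)
    have "sh ti \<in> T2" using ti by (simp add: T2_def)
    then show "\<exists>j. (0, j) \<in> T2" using ti by (auto simp: sh_def)
  qed
  define Y2 where "Y2 = Yset as2 bs2 T2"
  define hl where "hl = hlines W \<union> set (take im as)"
  define vl' where "vl' = vlines W \<union> set (take jm bs)"
  define W' where "W' = \<lparr>pts = Y2, hlines = hl, vlines = vl'\<rparr>"
  have finl: "finite hl" "finite vl'" using ulp by (simp_all add: hl_def vl'_def is_ULP_def)
  have hW: "\<And>P. P \<in> X \<Longrightarrow> fst P \<notin> hlines W \<and> snd P \<notin> vlines W"
    using ulp by (simp add: is_ULP_def X_def)
  have offl: "\<And>P. P \<in> Y2 \<Longrightarrow> fst P \<notin> hl \<and> snd P \<notin> vl'"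
  proof -
    fix P assume P: "P \<in> Y2"
    have f2: "fst P \<in> set (drop im as)" using Yset_fst[OF P[unfolded Y2_def]] by (simp add: as2_def)
    have s2: "snd P \<in> set (drop jm bs)" using Yset_snd[OF P[unfolded Y2_def]] by (simp add: bs2_def)
    have "fst P \<in> set as" using f2 set_drop_subset[of im as] by (rule subsetD[rotated])
    then have "fst P \<in> fst ` X" using vl(2) by simp
    then have a: "fst P \<notin> hlines W" using hW by auto
    have "snd P \<in> set bs" using s2 set_drop_subset[of jm bs] by (rule subsetD[rotated])
    then have "snd P \<in> snd ` X" using vl(4) by simp
    then have b: "snd P \<notin> vlines W" using hW by auto
    have "set (take im as) \<inter> set (drop im as) = {}" by (rule set_take_disj_set_drop_if_distinct[OF vl(1)]) simp
    then have "fst P \<notin> set (take im as)" using f2 by blast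
    moreover have "set (take jm bs) \<inter> set (drop jm bs) = {}" by (rule set_take_disj_set_drop_if_distinct[OF vl(3)]) simp
    then have "snd P \<notin> set (take jm bs)" using s2 by blast
    ultimately show "fst P \<notin> hl \<and> snd P \<notin> vl'" using a b by (simp add: hl_def vl'_def)
  qed
  have ULACM: "is_ULACM W'"
    unfolding is_ULACM_def is_ULP_def W'_def
    using finl offl Yset_finite Yset_ACM[OF d2 st2] by (simp add: Y2_def)
  have LamW': "Lambda W' = \<Lambda> * Gf as bs (im, jm)"
  proof -
    have dh: "hlines W \<inter> set (take im as) = {}"
    proof -
      have "set (take im as) \<subseteq> fst ` X" using set_take_subset[of im as] vl(2) by simp
      then show ?thesis using hW by fastforce
    qed
    have dv: "vlines W \<inter> set (take jm bs) = {}"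
    proof -
      have "set (take jm bs) \<subseteq> snd ` X" using set_take_subset[of jm bs] vl(4) by simp
      then show ?thesis using hW by fastforce
    qed
    have fW: "finite (hlines W)" "finite (vlines W)" using ulp by (simp_all add: is_ULP_def)
    have "(\<Prod>A\<in>hl. Hform A) = (\<Prod>A\<in>hlines W. Hform A) * (\<Prod>k<im. Hform (as!k))"
      unfolding hl_def using prod.union_disjoint[OF fW(1) _ dh, of Hform] prod_take[OF vl(1), of im Hform] imh h_def by simp
    moreover have "(\<Prod>B\<in>vl'. Vform B) = (\<Prod>B\<in>vlines W. Vform B) * (\<Prod>k<jm. Vform (bs!k))"
      unfolding vl'_def using prod.union_disjoint[OF fW(2) _ dv, of Vform] prod_take[OF vl(3), of jm Vform] jmv v_def by simp
    ultimately show ?thesis unfolding Lambda_def W'_def \<Lambda>_def Gf_def by (simp add: mult_ac)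
  qed
  have S_eq2: "S = (\<lambda>g. Lambda W' * g) ` (Gf as2 bs2 ` T2)"
  proof -
    have "\<Lambda> * Gf as bs t = Lambda W' * Gf as2 bs2 (sh t)" if t: "t \<in> T" for t
    proof -
      have "Gf as bs t = Gf as bs (im, jm) * Gf as2 bs2 (sh t)"
        unfolding as2_def bs2_def sh_def
        by (rule Gf_decomp) (use imh jmv im_le[OF t] jm_le[OF t] in \<open>simp_all add: h_def v_def\<close>)
      then show ?thesis unfolding LamW' by (simp only: mult.assoc)
    qed
    then have "S = (\<lambda>t. Lambda W' * Gf as2 bs2 (sh t)) ` T" unfolding S_eq by (rule image_cong[OF refl])
    then show ?thesis by (simp add: T2_def image_image)
  qed
  have "ideal_gen S = (\<lambda>g. Lambda W' * g) ` ideal_gen (Gf as2 bs2 ` T2)"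
    unfolding S_eq2 by (rule ideal_gen_image_mult)
  also have "\<dots> = (\<lambda>g. Lambda W' * g) ` I_X Y2"
    unfolding Y2_def staircase[OF d2 st2] ..
  also have "\<dots> = I_W W'"
    unfolding W'_def by (rule lines_all[OF finl offl, symmetric])
  finally show ?thesis using ULACM by blast
qed

end
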